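(* Let $[X,d,m]$ be a metric random walk space with invariant and reversible measure $\nu$. (1) The space is $m$-connected if and only if for every $0\le u_0\in L^2(X,\nu)$ that is not $\nu$-a.e. zero, $e^{t\Delta_m}u_0>0$ $\nu$-a.e. for all $t>0$. (2) The space is weakly-$m$-connected if and only if for every $0\le u_0\in L^2(X,\nu)\cap C(X)$ that is not $\nu$-a.e. zero, $e^{t\Delta_m}u_0>0$ $\nu$-a.e. for all $t>0$.
   Context: A metric random walk space $[X,d,m]$ is a Polish metric space $(X,d)$ with a family $m=(m_x)_{x\in X}$ of Borel probability measures, $x\mapsto m_x(A)$ Borel measurable for each Borel $A$, each with finite first moment. A Radon measure $\nu$ is invariant if $\nu(A)=\int_X m_x(A)\,d\nu(x)$ for every $\nu$-measurable $A$, reversible if $dm_x(y)d\nu(x)=dm_y(x)d\nu(y)$; $(X,\nu)$ is $\sigma$-finite. Iterates: $m_x^{*1}=m_x$, $m_x^{*n}(A)=\int_X m_z(A)\,dm_x^{*(n-1)}(z)$. For $\nu$-measurable $D$, $N^m_D=\{x: m_x^{*n}(D)=0\ \forall n\in\mathbb N\}$. The space (with $\nu$) is $m$-connected if $\nu(N^m_D)=0$ for every $\nu$-measurable $D$ with $0<\nu(D)<\infty$, and weakly-$m$-connected if $\nu(N^m_D)=0$ for every open $D$ with $0<\nu(D)<\infty$. The heat flow $(e^{t\Delta_m})_{t\ge0}$ is the semigroup on $L^2(X,\nu)$ generated by $\Delta_m f(x)=\int_X (f(y)-f(x))dm_x(y)$ (with domain $L^1\cap L^2$), i.e. the semigroup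 associated with the closed form $\mathcal E_m(f,g)=\frac12\iint (f(y)-f(x))(g(y)-g(x))\,dm_x(y)d\nu(x)$. *)

theory Defs
  imports "HOL-Probability.Probability"
begin

definition metric_random_walk_space :: "('a::polish_space \<Rightarrow> 'a measure) \<Rightarrow> bool" where
  "metric_random_walk_space m \<longleftrightarrow>
     (\<forall>x. prob_space (m x) \<and> sets (m x) = sets borel) \<and>
     (\<forall>A\<in>sets borel. (\<lambda>x. emeasure (m x) A) \<in> borel_measurable borel) \<and>
     (\<forall>x. (\<integral>\<^sup>+ y. ennreal (dist x y) \<partial>m x) < \<infinity>)"

definition radon_measure :: "'a::polish_space measure \<Rightarrow> bool" where
  "radon_measure \<nu> \<longleftrightarrow> sets \<nu> = sets borel \<and>
     (\<forall>x. \<exists>U. open U \<and> x \<in> U \<and> emeasure \<nu> U < \<infinity>)"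

definition invariant_measure :: "('a::polish_space \<Rightarrow> 'a measure) \<Rightarrow> 'a measure \<Rightarrow> bool" where
  "invariant_measure m \<nu> \<longleftrightarrow>
     (\<forall>A\<in>sets borel. emeasure \<nu> A = (\<integral>\<^sup>+ x. emeasure (m x) A \<partial>\<nu>))"

text \<open>Reversibility dm_x(y) d\<nu>(x) = dm_y(x) d\<nu>(y), tested on measurable rectangles A x B.\<close>
definition reversible_measure :: "('a::polish_space \<Rightarrow> 'a measure) \<Rightarrow> 'a measure \<Rightarrow> bool" where
  "reversible_measure m \<nu> \<longleftrightarrow>
     (\<forall>A\<in>sets borel. \<forall>B\<in>sets borel.
        (\<integral>\<^sup>+ x. indicator A x * emeasure (m x) B \<partial>\<nu>) =
        (\<integral>\<^sup>+ x. indicator B x * emeasure (m x) A \<partial>\<nu>))"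

fun mstar :: "('a::polish_space \<Rightarrow> 'a measure) \<Rightarrow> nat \<Rightarrow> 'a \<Rightarrow> 'a measure" where
  "mstar m 0 x = return borel x"
| "mstar m (Suc n) x = (if n = 0 then m x else mstar m n x \<bind> m)"

definition N_set :: "('a::polish_space \<Rightarrow> 'a measure) \<Rightarrow> 'a set \<Rightarrow> 'a set" where
  "N_set m D = {x. \<forall>n\<ge>1. emeasure (mstar m n x) D = 0}"

definition m_connected :: "('a::polish_space \<Rightarrow> 'a measure) \<Rightarrow> 'a measure \<Rightarrow> bool" where
  "m_connected m \<nu> \<longleftrightarrow>
     (\<forall>D\<in>sets \<nu>. 0 < emeasure \<nu> D \<and> emeasure \<nu> D < \<infinity> \<longrightarrow> emeasure \<nu> (N_set m D) = 0)"

definition weakly_m_connected :: "('a::polish_space \<Rightarrow> 'a measure) \<Rightarrow> 'a measure \<Rightarrow> bool" where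
  "weakly_m_connected m \<nu> \<longleftrightarrow>
     (\<forall>D. open D \<and> 0 < emeasure \<nu> D \<and> emeasure \<nu> D < \<infinity> \<longrightarrow> emeasure \<nu> (N_set m D) = 0)"

definition laplacian_m :: "('a::polish_space \<Rightarrow> 'a measure) \<Rightarrow> ('a \<Rightarrow> real) \<Rightarrow> 'a \<Rightarrow> real" where
  "laplacian_m m f x = (\<integral> y. (f y - f x) \<partial>m x)"

definition L2_fun :: "'a measure \<Rightarrow> ('a \<Rightarrow> real) \<Rightarrow> bool" where
  "L2_fun \<nu> f \<longleftrightarrow> f \<in> borel_measurable \<nu> \<and> integrable \<nu> (\<lambda>x. (f x)\<^sup>2)"

text \<open>u is the heat flow t \<mapsto> e^{t\<Delta>_m} u0 in L^2(X,\<nu>): u(t) \<in> L^2 for t \<ge> 0,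
  u(0) = u0 (\<nu>-a.e.), and t \<mapsto> u(t) is differentiable in L^2 on [0,\<infinity>)
  (one-sided at 0) with derivative \<Delta>_m u(t), i.e. u is the (strong) solution of
  the abstract Cauchy problem for the generator \<Delta>_m.\<close>
definition heat_flow :: "('a::polish_space \<Rightarrow> 'a measure) \<Rightarrow> 'a measure \<Rightarrow> ('a \<Rightarrow> real)
    \<Rightarrow> (real \<Rightarrow> 'a \<Rightarrow> real) \<Rightarrow> bool" where
  "heat_flow m \<nu> u0 u \<longleftrightarrow>
     (\<forall>t\<ge>0. L2_fun \<nu> (u t)) \<and>
     (AE x in \<nu>. u 0 x = u0 x) \<and>
     (\<forall>t\<ge>0. ((\<lambda>s. \<integral>\<^sup>+ x. ennreal (((u s x - u t x) / (s - t) - laplacian_m m (u t) x)\<^sup>2) \<partial>\<nu>)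
              \<longlongrightarrow> 0) (at t within {0..}))"

end

theory Submission
  imports Defs
begin

locale mrw =
  fixes m :: "'a::polish_space \<Rightarrow> 'a measure" and \<nu> :: "'a measure"
  assumes prob: "\<And>x. prob_space (m x)"
    and sets_m: "\<And>x. sets (m x) = sets borel"
    and meas_m: "\<And>A. A \<in> sets borel \<Longrightarrow> (\<lambda>x. emeasure (m x) A) \<in> borel_measurable borel"
    and sets_nu: "sets \<nu> = sets borel"
    and sf: "sigma_finite_measure \<nu>"
    and inv: "\<And>A. A \<in> sets borel \<Longrightarrow> emeasure \<nu> A = (\<integral>\<^sup>+ x. emeasure (m x) A \<partial>\<nu>)"
    and rev: "\<And>A B. A \<in> sets borel \<Longrightarrow> B \<in> sets borel \<Longrightarrow>
        (\<integral>\<^sup>+ x. indicator A x * emeasure (m x) B \<partial>\<nu>) =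
        (\<integral>\<^sup>+ x. indicator B x * emeasure (m x) A \<partial>\<nu>)"
begin

lemma space_nu[simp]: "space \<nu> = UNIV"
  using sets_eq_imp_space_eq[OF sets_nu] by simp

lemma space_m[simp]: "space (m x) = UNIV"
  using sets_eq_imp_space_eq[OF sets_m[of x]] by simp

lemma measurable_m_eq[simp]: "measurable (m x) N = measurable borel N"
  by (rule measurable_cong_sets[OF sets_m refl])

lemma measurable_nu_eq[simp]: "measurable \<nu> N = measurable borel N"
  by (rule measurable_cong_sets[OF sets_nu refl])

lemma sets_nu_eq[simp]: "A \<in> sets \<nu> \<longleftrightarrow> A \<in> sets borel"
  using sets_nu by simp

lemma m_prob_alg[measurable]: "m \<in> borel \<rightarrow>\<^sub>M prob_algebra borel"
  apply (rule measurable_prob_algebraI)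
   apply (rule prob)
  apply (rule measurable_subprob_algebra)
  using prob prob_space_imp_subprob_space sets_m meas_m by auto

lemma m_subprob_alg[measurable]: "m \<in> borel \<rightarrow>\<^sub>M subprob_algebra borel"
  using m_prob_alg by (rule measurable_prob_algebraD)

lemma mstar_Suc: "mstar m (Suc n) x = mstar m n x \<bind> m"
proof (cases n)
  case 0
  have "return borel x \<bind> m = m x" by (rule bind_return[OF m_subprob_alg]) simp
  then show ?thesis using 0 by simp
qed simp

declare mstar.simps(2)[simp del]

lemma mstar_prob_alg[measurable]: "mstar m n \<in> borel \<rightarrow>\<^sub>M prob_algebra borel"
proof (induction n)
  case 0
  have "mstar m 0 = return borel" by (rule ext) simp
  then show ?case by simp
next
  case (Suc n)
  have "mstar m (Suc n) = (\<lambda>x. mstar m n x \<bind> m)" by (rule ext) (simp add: mstar_Suc)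
  then show ?case using measurable_bind_prob_space[OF Suc m_prob_alg] by simp
qed

lemma mstar_subprob_alg[measurable]: "mstar m n \<in> borel \<rightarrow>\<^sub>M subprob_algebra borel"
  using mstar_prob_alg by (rule measurable_prob_algebraD)

lemma measurable_mstar_eq[simp]: "measurable (mstar m n x) N = measurable borel N"
  using measurable_space[OF mstar_prob_alg, of x n]
  by (intro measurable_cong_sets) (auto simp: space_prob_algebra)

lemma mstar_space: "mstar m n x \<in> space (prob_algebra borel)"
  using measurable_space[OF mstar_prob_alg] by simp

lemma prob_mstar: "prob_space (mstar m n x)"
  using mstar_space[of n x] by (simp add: space_prob_algebra)

lemma sets_mstar[simp]: "sets (mstar m n x) = sets borel"
  using mstar_space[of n x] by (simp add: space_prob_algebra)

lemma space_mstar[simp]: "space (mstar m n x) = UNIV"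
  using sets_eq_imp_space_eq[OF sets_mstar[of n x]] by simp

lemma mstar_Suc': "mstar m (Suc n) x = m x \<bind> mstar m n"
proof (induction n arbitrary: x)
  case 0
  have "m x \<bind> return borel = m x"
    by (rule bind_return'') (simp add: sets_m)
  then show ?case by (simp add: mstar.simps)
next
  case (Suc n)
  have "mstar m (Suc (Suc n)) x = mstar m (Suc n) x \<bind> m" by (rule mstar_Suc)
  also have "\<dots> = (m x \<bind> mstar m n) \<bind> m" using Suc by simp
  also have "\<dots> = m x \<bind> (\<lambda>z. mstar m n z \<bind> m)"
    apply (rule bind_assoc[where N=borel and R=borel])
    using mstar_subprob_alg apply simp
    by (rule m_subprob_alg)
  also have "(\<lambda>z. mstar m n z \<bind> m) = mstar m (Suc n)" by (rule ext) (simp only: mstar_Suc)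
  finally show ?case .
qed

lemma bind_m_nu: "\<nu> \<bind> m = \<nu>"
proof (rule measure_eqI)
  have "sets (\<nu> \<bind> m) = sets borel"
    by (rule sets_bind) (auto simp: sets_m)
  then show "sets (\<nu> \<bind> m) = sets \<nu>" using sets_nu by simp
  fix A assume "A \<in> sets (\<nu> \<bind> m)"
  then have A: "A \<in> sets borel" using \<open>sets (\<nu> \<bind> m) = sets borel\<close> by simp
  show "emeasure (\<nu> \<bind> m) A = emeasure \<nu> A"
    apply (subst emeasure_bind[where N=borel])
    using A inv[OF A] by auto
qed

lemma inv_nn: assumes f[measurable]: "f \<in> borel_measurable borel"
  shows "(\<integral>\<^sup>+x. (\<integral>\<^sup>+y. f y \<partial>m x) \<partial>\<nu>) = (\<integral>\<^sup>+x. f x \<partial>\<nu>)"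
proof -
  have "(\<integral>\<^sup>+x. f x \<partial>(\<nu> \<bind> m)) = (\<integral>\<^sup>+x. (\<integral>\<^sup>+y. f y \<partial>m x) \<partial>\<nu>)"
    by (rule nn_integral_bind[where B=borel]) auto
  then show ?thesis using bind_m_nu by simp
qed

lemma meas_Pn[measurable]: assumes f[measurable]: "f \<in> borel_measurable borel"
  shows "(\<lambda>x. \<integral>\<^sup>+y. f y \<partial>mstar m n x) \<in> borel_measurable borel"
  by (rule measurable_compose[OF mstar_subprob_alg nn_integral_measurable_subprob_algebra]) simp

lemma meas_P1[measurable]: assumes f[measurable]: "f \<in> borel_measurable borel"
  shows "(\<lambda>x. \<integral>\<^sup>+y. f y \<partial>m x) \<in> borel_measurable borel"
  by (rule measurable_compose[OF m_subprob_alg nn_integral_measurable_subprob_algebra]) simp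

lemma nn_mstar_Suc: assumes f[measurable]: "f \<in> borel_measurable borel"
  shows "(\<integral>\<^sup>+y. f y \<partial>mstar m (Suc n) x) = (\<integral>\<^sup>+z. (\<integral>\<^sup>+y. f y \<partial>m z) \<partial>mstar m n x)"
  unfolding mstar_Suc by (rule nn_integral_bind[where B=borel]) auto

lemma nn_mstar_Suc': assumes f[measurable]: "f \<in> borel_measurable borel"
  shows "(\<integral>\<^sup>+y. f y \<partial>mstar m (Suc n) x) = (\<integral>\<^sup>+z. (\<integral>\<^sup>+y. f y \<partial>mstar m n z) \<partial>m x)"
  unfolding mstar_Suc' by (rule nn_integral_bind[where B=borel]) auto

lemma inv_nn_n: assumes f[measurable]: "f \<in> borel_measurable borel"
  shows "(\<integral>\<^sup>+x. (\<integral>\<^sup>+y. f y \<partial>mstar m n x) \<partial>\<nu>) = (\<integral>\<^sup>+x. f x \<partial>\<nu>)"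
  using f
proof (induction n arbitrary: f)
  case 0
  then show ?case by (simp add: nn_integral_return)
next
  case (Suc n)
  note [measurable] = Suc.prems
  have "(\<integral>\<^sup>+x. (\<integral>\<^sup>+y. f y \<partial>mstar m (Suc n) x) \<partial>\<nu>)
     = (\<integral>\<^sup>+x. (\<integral>\<^sup>+z. (\<integral>\<^sup>+y. f y \<partial>m z) \<partial>mstar m n x) \<partial>\<nu>)"
    by (simp add: nn_mstar_Suc)
  also have "\<dots> = (\<integral>\<^sup>+z. (\<integral>\<^sup>+y. f y \<partial>m z) \<partial>\<nu>)"
    by (rule Suc.IH) simp
  also have "\<dots> = (\<integral>\<^sup>+x. f x \<partial>\<nu>)" by (rule inv_nn) simp
  finally show ?case .
qed


definition kap :: "'a \<Rightarrow> ('a \<times> 'a) measure" where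
  "kap x = distr (m x) (borel \<Otimes>\<^sub>M borel) (\<lambda>y. (x, y))"

definition mu :: "('a \<times> 'a) measure" where
  "mu = \<nu> \<bind> kap"

lemma kap_meas[measurable]: "kap \<in> borel \<rightarrow>\<^sub>M prob_algebra (borel \<Otimes>\<^sub>M borel)"
  unfolding kap_def by measurable

lemma kap_meas'[measurable]: "kap \<in> borel \<rightarrow>\<^sub>M subprob_algebra (borel \<Otimes>\<^sub>M borel)"
  using kap_meas by (rule measurable_prob_algebraD)

lemma sets_mu: "sets mu = sets (borel \<Otimes>\<^sub>M borel)"
  unfolding mu_def
  by (rule sets_bind) (auto simp: kap_def)

lemma nn_mu: assumes H[measurable]: "H \<in> borel_measurable (borel \<Otimes>\<^sub>M borel)"
  shows "(\<integral>\<^sup>+p. H p \<partial>mu) = (\<integral>\<^sup>+x. (\<integral>\<^sup>+y. H (x, y) \<partial>m x) \<partial>\<nu>)"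
proof -
  have "(\<integral>\<^sup>+p. H p \<partial>mu) = (\<integral>\<^sup>+x. (\<integral>\<^sup>+p. H p \<partial>kap x) \<partial>\<nu>)"
    unfolding mu_def by (rule nn_integral_bind[where B="borel \<Otimes>\<^sub>M borel"]) auto
  also have "\<dots> = (\<integral>\<^sup>+x. (\<integral>\<^sup>+y. H (x, y) \<partial>m x) \<partial>\<nu>)"
    unfolding kap_def by (subst nn_integral_distr) auto
  finally show ?thesis .
qed

lemma mu_rect: assumes [measurable]: "A \<in> sets borel" "B \<in> sets borel"
  shows "emeasure mu (A \<times> B) = (\<integral>\<^sup>+ x. indicator A x * emeasure (m x) B \<partial>\<nu>)"
proof -
  have "emeasure mu (A \<times> B) = (\<integral>\<^sup>+p. indicator (A \<times> B) p \<partial>mu)"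
    using sets_mu by (simp add: nn_integral_indicator)
  also have "\<dots> = (\<integral>\<^sup>+x. (\<integral>\<^sup>+y. indicator A x * indicator B y \<partial>m x) \<partial>\<nu>)"
    by (subst nn_mu) (auto simp: indicator_times)
  also have "\<dots> = (\<integral>\<^sup>+ x. indicator A x * emeasure (m x) B \<partial>\<nu>)"
    by (subst nn_integral_cmult) (auto simp: sets_m)
  finally show ?thesis .
qed

lemma mu_swap: "distr mu (borel \<Otimes>\<^sub>M borel) (\<lambda>(x, y). (y, x)) = mu"
proof -
  let ?E = "{a \<times> b | a b. a \<in> sets borel \<and> b \<in> sets borel} :: ('a \<times> 'a) set set"
  obtain A :: "nat \<Rightarrow> 'a set" where A: "range A \<subseteq> sets \<nu>" "(\<Union>i. A i) = space \<nu>"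
    "\<And>i. emeasure \<nu> (A i) \<noteq> \<infinity>"
    using sigma_finite_measure.sigma_finite[OF sf] by metis
  define C where "C i = A (fst (prod_decode i)) \<times> A (snd (prod_decode i))" for i
  have Ab: "A i \<in> sets borel" for i using A(1) sets_nu by blast
  have sw: "(\<lambda>(x, y). (y, x)) \<in> (borel \<Otimes>\<^sub>M borel) \<rightarrow>\<^sub>M (borel \<Otimes>\<^sub>M borel :: ('a \<times> 'a) measure)"
    by measurable
  have "mu = distr mu (borel \<Otimes>\<^sub>M borel) (\<lambda>(x, y). (y, x))"
  proof (rule measure_eqI_generator_eq[where E="?E" and \<Omega>=UNIV and A=C])
    show "Int_stable ?E" using Int_stable_pair_measure_generator[of borel borel] by simp
    show "?E \<subseteq> Pow UNIV" by auto
    show "sets (distr mu (borel \<Otimes>\<^sub>M borel) (\<lambda>(x, y). (y, x))) = sigma_sets UNIV ?E"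
      by (simp add: sets_pair_measure)
    show "sets mu = sigma_sets UNIV ?E" by (simp add: sets_mu sets_pair_measure)
    show "range C \<subseteq> ?E" using Ab unfolding C_def by blast
    show "(\<Union>i. C i) = UNIV"
    proof -
      have "\<exists>i. p \<in> C i" for p
      proof -
        obtain i j where "fst p \<in> A i" "snd p \<in> A j" using A(2) by (metis UNIV_I UN_E space_nu)
        then have "p \<in> C (prod_encode (i, j))" unfolding C_def by (cases p) auto
        then show ?thesis by blast
      qed
      then show ?thesis by blast
    qed
    fix X assume "X \<in> ?E"
    then obtain a b where X: "X = a \<times> b" "a \<in> sets borel" "b \<in> sets borel" by blast
    have pre: "(\<lambda>(x, y). (y, x)) -` (a \<times> b) \<inter> space (borel \<Otimes>\<^sub>M borel) = b \<times> a" by (auto simp: space_pair_measure)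
    have "emeasure (distr mu (borel \<Otimes>\<^sub>M borel) (\<lambda>(x, y). (y, x))) X = emeasure mu (b \<times> a)"
      apply (subst emeasure_distr)
      using sw X pre by (auto simp: sets_mu measurable_cong_sets[OF sets_mu refl] sets_eq_imp_space_eq[OF sets_mu])
    also have "\<dots> = emeasure mu X" using X by (simp add: mu_rect rev)
    finally show "emeasure mu X = emeasure (distr mu (borel \<Otimes>\<^sub>M borel) (\<lambda>(x, y). (y, x))) X" by simp
  next
    fix i
    obtain a b where ab: "C i = A a \<times> A b" unfolding C_def by blast
    have "emeasure mu (C i) = (\<integral>\<^sup>+ x. indicator (A a) x * emeasure (m x) (A b) \<partial>\<nu>)"
      using ab Ab by (simp add: mu_rect)
    also have "\<dots> \<le> (\<integral>\<^sup>+ x. indicator (A a) x \<partial>\<nu>)"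
    proof (rule nn_integral_mono)
      fix x
      have "emeasure (m x) (A b) \<le> 1" using prob_space.emeasure_le_1[OF prob] by simp
      then show "indicator (A a) x * emeasure (m x) (A b) \<le> indicator (A a) x"
        by (simp add: indicator_def)
    qed
    also have "\<dots> = emeasure \<nu> (A a)" using Ab by simp
    finally show "emeasure mu (C i) \<noteq> \<infinity>"
      using A(3)[of a] by (metis infinity_ennreal_def neq_top_trans)
  qed
  then show ?thesis by simp
qed

lemma sym_nn: assumes H[measurable]: "H \<in> borel_measurable (borel \<Otimes>\<^sub>M borel)"
  shows "(\<integral>\<^sup>+x. (\<integral>\<^sup>+y. H (x, y) \<partial>m x) \<partial>\<nu>) = (\<integral>\<^sup>+x. (\<integral>\<^sup>+y. H (y, x) \<partial>m x) \<partial>\<nu>)"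
proof -
  have sw: "(\<lambda>(x, y). (y, x)) \<in> mu \<rightarrow>\<^sub>M (borel \<Otimes>\<^sub>M borel :: ('a \<times> 'a) measure)"
    by (simp add: measurable_cong_sets[OF sets_mu refl])
  have "(\<integral>\<^sup>+x. (\<integral>\<^sup>+y. H (x, y) \<partial>m x) \<partial>\<nu>) = (\<integral>\<^sup>+p. H p \<partial>mu)" by (simp add: nn_mu)
  also have "\<dots> = (\<integral>\<^sup>+p. H p \<partial>distr mu (borel \<Otimes>\<^sub>M borel) (\<lambda>(x, y). (y, x)))"
    by (simp add: mu_swap)
  also have "\<dots> = (\<integral>\<^sup>+p. H (case p of (x, y) \<Rightarrow> (y, x)) \<partial>mu)"
    by (rule nn_integral_distr[OF sw]) simp
  also have "\<dots> = (\<integral>\<^sup>+x. (\<integral>\<^sup>+y. H (y, x) \<partial>m x) \<partial>\<nu>)" by (subst nn_mu) auto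
  finally show ?thesis .
qed


lemma sym_prod: assumes [measurable]: "f \<in> borel_measurable borel" "g \<in> borel_measurable borel"
  shows "(\<integral>\<^sup>+x. f x * (\<integral>\<^sup>+y. g y \<partial>m x) \<partial>\<nu>) = (\<integral>\<^sup>+x. g x * (\<integral>\<^sup>+y. f y \<partial>m x) \<partial>\<nu>)"
proof -
  have "(\<integral>\<^sup>+x. f x * (\<integral>\<^sup>+y. g y \<partial>m x) \<partial>\<nu>) = (\<integral>\<^sup>+x. (\<integral>\<^sup>+y. f x * g y \<partial>m x) \<partial>\<nu>)"
    by (rule nn_integral_cong) (simp add: nn_integral_cmult)
  also have "\<dots> = (\<integral>\<^sup>+x. (\<integral>\<^sup>+y. (\<lambda>p. f (fst p) * g (snd p)) (x, y) \<partial>m x) \<partial>\<nu>)" by simp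
  also have "\<dots> = (\<integral>\<^sup>+x. (\<integral>\<^sup>+y. (\<lambda>p. f (fst p) * g (snd p)) (y, x) \<partial>m x) \<partial>\<nu>)"
    by (rule sym_nn) measurable
  also have "\<dots> = (\<integral>\<^sup>+x. g x * (\<integral>\<^sup>+y. f y \<partial>m x) \<partial>\<nu>)"
    by (rule nn_integral_cong) (simp, subst nn_integral_multc, auto simp: mult.commute)
  finally show ?thesis .
qed

lemma sym_n: assumes "f \<in> borel_measurable borel" "g \<in> borel_measurable borel"
  shows "(\<integral>\<^sup>+x. f x * (\<integral>\<^sup>+y. g y \<partial>mstar m n x) \<partial>\<nu>) = (\<integral>\<^sup>+x. g x * (\<integral>\<^sup>+y. f y \<partial>mstar m n x) \<partial>\<nu>)"
  using assms
proof (induction n arbitrary: f g)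
  case 0
  then show ?case by (simp add: nn_integral_return mult.commute mstar.simps)
next
  case (Suc n)
  note [measurable] = Suc.prems
  have "(\<integral>\<^sup>+x. f x * (\<integral>\<^sup>+y. g y \<partial>mstar m (Suc n) x) \<partial>\<nu>)
      = (\<integral>\<^sup>+x. f x * (\<integral>\<^sup>+z. (\<integral>\<^sup>+y. g y \<partial>mstar m n z) \<partial>m x) \<partial>\<nu>)"
    by (simp add: nn_mstar_Suc')
  also have "\<dots> = (\<integral>\<^sup>+x. (\<integral>\<^sup>+y. g y \<partial>mstar m n x) * (\<integral>\<^sup>+y. f y \<partial>m x) \<partial>\<nu>)"
    by (rule sym_prod) measurable
  also have "\<dots> = (\<integral>\<^sup>+x. (\<integral>\<^sup>+y. f y \<partial>m x) * (\<integral>\<^sup>+y. g y \<partial>mstar m n x) \<partial>\<nu>)"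
    by (simp add: mult.commute)
  also have "\<dots> = (\<integral>\<^sup>+x. g x * (\<integral>\<^sup>+z. (\<integral>\<^sup>+y. f y \<partial>m z) \<partial>mstar m n x) \<partial>\<nu>)"
    by (rule Suc.IH) measurable
  also have "\<dots> = (\<integral>\<^sup>+x. g x * (\<integral>\<^sup>+y. f y \<partial>mstar m (Suc n) x) \<partial>\<nu>)"
    by (simp add: nn_mstar_Suc)
  finally show ?case .
qed

lemma N_set_meas: assumes "D \<in> sets borel" shows "N_set m D \<in> sets borel"
proof -
  have [measurable]: "(\<lambda>x. emeasure (mstar m n x) D) \<in> borel_measurable borel" for n
    using measurable_emeasure_kernel[OF mstar_subprob_alg assms] .
  have "Measurable.pred borel (\<lambda>x. \<forall>n. 1 \<le> n \<longrightarrow> emeasure (mstar m n x) D = 0)"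
    by measurable
  then show ?thesis by (simp add: N_set_def pred_def)
qed

end

lemma int_enn2real:
  assumes f[measurable]: "f \<in> borel_measurable M" and fin: "integral\<^sup>N M f < \<infinity>"
  shows "integrable M (\<lambda>x. enn2real (f x))" "integral\<^sup>L M (\<lambda>x. enn2real (f x)) = enn2real (integral\<^sup>N M f)"
proof -
  have ae: "AE x in M. f x \<noteq> \<infinity>" using nn_integral_PInf_AE[OF f] fin by simp
  have eq: "(\<integral>\<^sup>+x. ennreal (enn2real (f x)) \<partial>M) = integral\<^sup>N M f"
    by (rule nn_integral_cong_AE) (use ae in \<open>auto simp: less_top\<close>)
  show "integrable M (\<lambda>x. enn2real (f x))"
    by (rule integrableI_bounded) (use eq fin in auto)
  show "integral\<^sup>L M (\<lambda>x. enn2real (f x)) = enn2real (integral\<^sup>N M f)"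
    by (subst integral_eq_nn_integral) (use eq in auto)
qed

context mrw
begin

lemma meas_int_kernel[measurable]:
  fixes F :: "'a \<times> 'a \<Rightarrow> real"
  assumes F[measurable]: "F \<in> borel_measurable (borel \<Otimes>\<^sub>M borel)"
  shows "(\<lambda>x. \<integral>y. F (x, y) \<partial>m x) \<in> borel_measurable borel"
proof -
  have "(\<lambda>x. integral\<^sup>L (kap x) F) \<in> borel_measurable borel"
    by (rule measurable_compose[OF kap_meas' integral_measurable_subprob_algebra]) simp
  moreover have "integral\<^sup>L (kap x) F = (\<integral>y. F (x, y) \<partial>m x)" for x
    unfolding kap_def by (subst integral_distr) auto
  ultimately show ?thesis by simp
qed

lemma meas_nn_kernel[measurable]:
  fixes F :: "'a \<times> 'a \<Rightarrow> ennreal"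
  assumes F[measurable]: "F \<in> borel_measurable (borel \<Otimes>\<^sub>M borel)"
  shows "(\<lambda>x. \<integral>\<^sup>+y. F (x, y) \<partial>m x) \<in> borel_measurable borel"
proof -
  have "(\<lambda>x. integral\<^sup>N (kap x) F) \<in> borel_measurable borel"
    by (rule measurable_compose[OF kap_meas' nn_integral_measurable_subprob_algebra]) simp
  moreover have "integral\<^sup>N (kap x) F = (\<integral>\<^sup>+y. F (x, y) \<partial>m x)" for x
    unfolding kap_def by (subst nn_integral_distr) auto
  ultimately show ?thesis by simp
qed

lemma kernel_int:
  fixes F :: "'a \<times> 'a \<Rightarrow> real"
  assumes F[measurable]: "F \<in> borel_measurable (borel \<Otimes>\<^sub>M borel)"
    and fin: "(\<integral>\<^sup>+x. (\<integral>\<^sup>+y. ennreal \<bar>F (x, y)\<bar> \<partial>m x) \<partial>\<nu>) < \<infinity>"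
  shows "(\<integral>x. (\<integral>y. F (x, y) \<partial>m x) \<partial>\<nu>) =
     enn2real (\<integral>\<^sup>+x. (\<integral>\<^sup>+y. ennreal (F (x, y)) \<partial>m x) \<partial>\<nu>) -
     enn2real (\<integral>\<^sup>+x. (\<integral>\<^sup>+y. ennreal (- F (x, y)) \<partial>m x) \<partial>\<nu>)"
proof -
  define Ia where "Ia x = (\<integral>\<^sup>+y. ennreal \<bar>F (x, y)\<bar> \<partial>m x)" for x
  define Ip where "Ip x = (\<integral>\<^sup>+y. ennreal (F (x, y)) \<partial>m x)" for x
  define In where "In x = (\<integral>\<^sup>+y. ennreal (- F (x, y)) \<partial>m x)" for x
  have [measurable]: "Ia \<in> borel_measurable borel" "Ip \<in> borel_measurable borel" "In \<in> borel_measurable borel"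
    unfolding Ia_def Ip_def In_def by measurable
  have le: "Ip x \<le> Ia x" "In x \<le> Ia x" for x
    unfolding Ia_def Ip_def In_def by (auto intro!: nn_integral_mono ennreal_leI)
  have finp: "integral\<^sup>N \<nu> Ip < \<infinity>" "integral\<^sup>N \<nu> In < \<infinity>"
    using fin le by (auto simp: Ia_def[symmetric] intro: le_less_trans[OF nn_integral_mono])
  have ae: "AE x in \<nu>. Ia x \<noteq> \<infinity>"
    by (rule nn_integral_PInf_AE) (use fin in \<open>auto simp: Ia_def\<close>)
  have "AE x in \<nu>. (\<integral>y. F (x, y) \<partial>m x) = enn2real (Ip x) - enn2real (In x)"
  proof (rule AE_mp[OF ae], intro AE_I2 impI)
    fix x assume "Ia x \<noteq> \<infinity>"
    then have "integrable (m x) (\<lambda>y. F (x, y))"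
      by (intro integrableI_bounded) (auto simp: Ia_def less_top)
    then show "(\<integral>y. F (x, y) \<partial>m x) = enn2real (Ip x) - enn2real (In x)"
      unfolding Ip_def In_def by (rule real_lebesgue_integral_def)
  qed
  then have "(\<integral>x. (\<integral>y. F (x, y) \<partial>m x) \<partial>\<nu>) = (\<integral>x. enn2real (Ip x) - enn2real (In x) \<partial>\<nu>)"
    by (intro integral_cong_AE) auto
  also have "\<dots> = (\<integral>x. enn2real (Ip x) \<partial>\<nu>) - (\<integral>x. enn2real (In x) \<partial>\<nu>)"
    by (rule Bochner_Integration.integral_diff; rule int_enn2real(1)) (use finp in auto)
  also have "\<dots> = enn2real (integral\<^sup>N \<nu> Ip) - enn2real (integral\<^sup>N \<nu> In)"
    using int_enn2real(2)[of Ip \<nu>] int_enn2real(2)[of In \<nu>] finp by simp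
  finally show ?thesis unfolding Ip_def In_def .
qed

lemma sym_int:
  fixes F :: "'a \<times> 'a \<Rightarrow> real"
  assumes F[measurable]: "F \<in> borel_measurable (borel \<Otimes>\<^sub>M borel)"
    and fin: "(\<integral>\<^sup>+x. (\<integral>\<^sup>+y. ennreal \<bar>F (x, y)\<bar> \<partial>m x) \<partial>\<nu>) < \<infinity>"
  shows "(\<integral>x. (\<integral>y. F (x, y) \<partial>m x) \<partial>\<nu>) = (\<integral>x. (\<integral>y. F (y, x) \<partial>m x) \<partial>\<nu>)"
proof -
  have s1: "(\<integral>\<^sup>+x. (\<integral>\<^sup>+y. ennreal \<bar>F (x, y)\<bar> \<partial>m x) \<partial>\<nu>) = (\<integral>\<^sup>+x. (\<integral>\<^sup>+y. ennreal \<bar>F (y, x)\<bar> \<partial>m x) \<partial>\<nu>)"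
    by (rule sym_nn[where H="\<lambda>p. ennreal \<bar>F p\<bar>", simplified]) measurable
  have s2: "(\<integral>\<^sup>+x. (\<integral>\<^sup>+y. ennreal (F (x, y)) \<partial>m x) \<partial>\<nu>) = (\<integral>\<^sup>+x. (\<integral>\<^sup>+y. ennreal (F (y, x)) \<partial>m x) \<partial>\<nu>)"
    by (rule sym_nn[where H="\<lambda>p. ennreal (F p)", simplified]) measurable
  have s3: "(\<integral>\<^sup>+x. (\<integral>\<^sup>+y. ennreal (- F (x, y)) \<partial>m x) \<partial>\<nu>) = (\<integral>\<^sup>+x. (\<integral>\<^sup>+y. ennreal (- F (y, x)) \<partial>m x) \<partial>\<nu>)"
    by (rule sym_nn[where H="\<lambda>p. ennreal (- F p)", simplified]) measurable
  have F'[measurable]: "(\<lambda>p. F (snd p, fst p)) \<in> borel_measurable (borel \<Otimes>\<^sub>M borel)" by measurable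
  have fin': "(\<integral>\<^sup>+x. (\<integral>\<^sup>+y. ennreal \<bar>(\<lambda>p. F (snd p, fst p)) (x, y)\<bar> \<partial>m x) \<partial>\<nu>) < \<infinity>"
    using fin s1 by simp
  show ?thesis
    using kernel_int[OF F fin] kernel_int[OF F' fin'] s2 s3 by simp
qed

end

lemma L2_prod_int:
  fixes f g :: "'b \<Rightarrow> real"
  assumes [measurable]: "f \<in> borel_measurable M" "g \<in> borel_measurable M"
    and "integrable M (\<lambda>x. (f x)\<^sup>2)" "integrable M (\<lambda>x. (g x)\<^sup>2)"
  shows "integrable M (\<lambda>x. f x * g x)"
proof (rule Bochner_Integration.integrable_bound[where f="\<lambda>x. ((f x)\<^sup>2 + (g x)\<^sup>2) / 2"])
  show "integrable M (\<lambda>x. ((f x)\<^sup>2 + (g x)\<^sup>2) / 2)" using assms by auto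
  show "AE x in M. norm (f x * g x) \<le> norm (((f x)\<^sup>2 + (g x)\<^sup>2) / 2)"
  proof (intro AE_I2)
    fix x
    have "2 * \<bar>f x * g x\<bar> \<le> (f x)\<^sup>2 + (g x)\<^sup>2"
      using sum_squares_bound[of "\<bar>f x\<bar>" "\<bar>g x\<bar>"] by (simp add: abs_mult)
    then show "norm (f x * g x) \<le> norm (((f x)\<^sup>2 + (g x)\<^sup>2) / 2)" by simp
  qed
qed simp

lemma CS_real:
  fixes f g :: "'b \<Rightarrow> real"
  assumes [measurable]: "f \<in> borel_measurable M" "g \<in> borel_measurable M"
    and fi: "integrable M (\<lambda>x. (f x)\<^sup>2)" and gi: "integrable M (\<lambda>x. (g x)\<^sup>2)"
  shows "(\<integral>x. f x * g x \<partial>M)\<^sup>2 \<le> (\<integral>x. (f x)\<^sup>2 \<partial>M) * (\<integral>x. (g x)\<^sup>2 \<partial>M)"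
proof -
  have fg: "integrable M (\<lambda>x. f x * g x)" using L2_prod_int assms by blast
  have fga: "integrable M (\<lambda>x. \<bar>f x\<bar> * \<bar>g x\<bar>)"
    using fg by (simp add: abs_mult[symmetric])
  have "(\<integral>\<^sup>+x. ennreal \<bar>f x\<bar> * ennreal \<bar>g x\<bar> \<partial>M)\<^sup>2 \<le>
      (\<integral>\<^sup>+x. (ennreal \<bar>f x\<bar>)^2 \<partial>M) * (\<integral>\<^sup>+x. (ennreal \<bar>g x\<bar>)^2 \<partial>M)"
    by (rule Cauchy_Schwarz_nn_integral) auto
  also have "(\<integral>\<^sup>+x. (ennreal \<bar>f x\<bar>)^2 \<partial>M) = (\<integral>\<^sup>+x. ennreal ((f x)\<^sup>2) \<partial>M)"
    by (rule nn_integral_cong) (simp add: ennreal_power)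
  also have "\<dots> = ennreal (\<integral>x. (f x)\<^sup>2 \<partial>M)"
    using nn_integral_eq_integral[OF fi] by simp
  also have "(\<integral>\<^sup>+x. (ennreal \<bar>g x\<bar>)^2 \<partial>M) = (\<integral>\<^sup>+x. ennreal ((g x)\<^sup>2) \<partial>M)"
    by (rule nn_integral_cong) (simp add: ennreal_power)
  also have "\<dots> = ennreal (\<integral>x. (g x)\<^sup>2 \<partial>M)"
    using nn_integral_eq_integral[OF gi] by simp
  also have "(\<integral>\<^sup>+x. ennreal \<bar>f x\<bar> * ennreal \<bar>g x\<bar> \<partial>M) = ennreal (\<integral>x. \<bar>f x\<bar> * \<bar>g x\<bar> \<partial>M)"
    using nn_integral_eq_integral[OF fga] by (simp add: ennreal_mult[symmetric])
  finally have "(\<integral>x. \<bar>f x\<bar> * \<bar>g x\<bar> \<partial>M)\<^sup>2 \<le> (\<integral>x. (f x)\<^sup>2 \<partial>M) * (\<integral>x. (g x)\<^sup>2 \<partial>M)"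
    by (simp add: ennreal_power ennreal_mult[symmetric] ennreal_le_iff integral_nonneg_AE)
  moreover have "\<bar>\<integral>x. f x * g x \<partial>M\<bar> \<le> (\<integral>x. \<bar>f x\<bar> * \<bar>g x\<bar> \<partial>M)"
    using integral_abs_bound[of M "\<lambda>x. f x * g x"] by (simp add: abs_mult)
  then have "(\<integral>x. f x * g x \<partial>M)\<^sup>2 \<le> (\<integral>x. \<bar>f x\<bar> * \<bar>g x\<bar> \<partial>M)\<^sup>2"
    by (metis abs_ge_zero power2_abs power_mono)
  ultimately show ?thesis by linarith
qed

lemma L2_diff:
  fixes f g :: "'b \<Rightarrow> real"
  assumes [measurable]: "f \<in> borel_measurable M" "g \<in> borel_measurable M"
    and "integrable M (\<lambda>x. (f x)\<^sup>2)" "integrable M (\<lambda>x. (g x)\<^sup>2)"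
  shows "integrable M (\<lambda>x. (f x - g x)\<^sup>2)"
proof -
  have "integrable M (\<lambda>x. (f x)\<^sup>2 + (g x)\<^sup>2 - 2 * (f x * g x))"
    using assms L2_prod_int[of f M g] by auto
  then show ?thesis by (simp add: power2_diff mult.assoc)
qed

lemma L2_add:
  fixes f g :: "'b \<Rightarrow> real"
  assumes [measurable]: "f \<in> borel_measurable M" "g \<in> borel_measurable M"
    and "integrable M (\<lambda>x. (f x)\<^sup>2)" "integrable M (\<lambda>x. (g x)\<^sup>2)"
  shows "integrable M (\<lambda>x. (f x + g x)\<^sup>2)"
  using L2_diff[of f M "\<lambda>x. - g x"] assms by simp

lemma L2_cmult:
  fixes f :: "'b \<Rightarrow> real"
  assumes "integrable M (\<lambda>x. (f x)\<^sup>2)"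
  shows "integrable M (\<lambda>x. (c * f x)\<^sup>2)"
  using assms by (simp add: power_mult_distrib)

lemma nn_fin_int:
  fixes f :: "'b \<Rightarrow> real"
  assumes [measurable]: "f \<in> borel_measurable M" and "(\<integral>\<^sup>+x. ennreal ((f x)\<^sup>2) \<partial>M) < \<infinity>"
  shows "integrable M (\<lambda>x. (f x)\<^sup>2)"
  by (rule integrableI_bounded) (use assms in auto)

context mrw
begin

lemma lap_meas[measurable]: assumes [measurable]: "f \<in> borel_measurable borel"
  shows "laplacian_m m f \<in> borel_measurable borel"
proof -
  have "(\<lambda>x. \<integral>y. (\<lambda>p. f (snd p) - f (fst p)) (x, y) \<partial>m x) \<in> borel_measurable borel"
    by (rule meas_int_kernel) measurable
  then show ?thesis unfolding laplacian_m_def[abs_def] by simp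
qed

lemma Pm_meas[measurable]: fixes f :: "'a \<Rightarrow> real" assumes [measurable]: "f \<in> borel_measurable borel"
  shows "(\<lambda>x. \<integral>y. f y \<partial>m x) \<in> borel_measurable borel"
proof -
  show ?thesis using meas_int_kernel[of "\<lambda>p. f (snd p)"] by simp
qed

lemma lap_eq: assumes "integrable (m x) f"
  shows "laplacian_m m f x = (\<integral>y. f y \<partial>m x) - f x"
proof -
  interpret prob_space "m x" by (rule prob)
  have "measure (m x) UNIV = 1" using prob_space by simp
  then show ?thesis unfolding laplacian_m_def
    using assms by simp
qed

lemma L2_ae_int: fixes f :: "'a \<Rightarrow> real" assumes [measurable]: "f \<in> borel_measurable borel" and fi: "integrable \<nu> (\<lambda>x. (f x)\<^sup>2)"
  shows "AE x in \<nu>. integrable (m x) f"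
proof -
  have "(\<integral>\<^sup>+x. (\<integral>\<^sup>+y. ennreal ((f y)\<^sup>2) \<partial>m x) \<partial>\<nu>) = (\<integral>\<^sup>+x. ennreal ((f x)\<^sup>2) \<partial>\<nu>)"
    by (rule inv_nn) simp
  also have "\<dots> < \<infinity>" using fi by (simp add: integrable_iff_bounded)
  finally have "AE x in \<nu>. (\<integral>\<^sup>+y. ennreal ((f y)\<^sup>2) \<partial>m x) \<noteq> \<infinity>"
    by (intro nn_integral_PInf_AE) auto
  then show ?thesis
  proof (rule AE_mp, intro AE_I2 impI)
    fix x assume "(\<integral>\<^sup>+y. ennreal ((f y)\<^sup>2) \<partial>m x) \<noteq> \<infinity>"
    then have "integrable (m x) (\<lambda>y. (f y)\<^sup>2)"
      by (intro integrableI_bounded) (auto simp: less_top)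
    then show "integrable (m x) f"
      using finite_measure.square_integrable_imp_integrable[of "m x" f] prob
      by (simp add: prob_space_def)
  qed
qed

end

context mrw
begin

lemma lap_int:
  fixes G G' v :: "'a \<Rightarrow> real"
  assumes [measurable]: "G \<in> borel_measurable borel" "G' \<in> borel_measurable borel" "v \<in> borel_measurable borel"
    and G0: "\<And>x. 0 \<le> G x" and G1: "\<And>x. G x \<le> 1"
    and G': "\<And>x. G' x = (\<integral>y. G y \<partial>m x)"
    and GL2: "integrable \<nu> (\<lambda>x. (G x)\<^sup>2)" and G'L2: "integrable \<nu> (\<lambda>x. (G' x)\<^sup>2)"
    and vL2: "integrable \<nu> (\<lambda>x. (v x)\<^sup>2)"
  shows "(\<integral>x. G x * laplacian_m m v x \<partial>\<nu>) = (\<integral>x. G' x * v x \<partial>\<nu>) - (\<integral>x. G x * v x \<partial>\<nu>)"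
proof -
  have Gm: "integrable (m x) G" for x
  proof -
    interpret prob_space "m x" by (rule prob)
    show ?thesis by (rule integrable_const_bound[where B=1]) (use G0 G1 in auto)
  qed
  have G'0: "0 \<le> G' x" for x unfolding G' using G0 by (simp add: integral_nonneg_AE)
  have absv: "integrable \<nu> (\<lambda>x. (\<bar>v x\<bar>)\<^sup>2)" using vL2 by simp
  have G'v: "integrable \<nu> (\<lambda>x. G' x * \<bar>v x\<bar>)"
    by (rule L2_prod_int) (use G'L2 absv in auto)
  have Gv: "integrable \<nu> (\<lambda>x. G x * v x)"
    by (rule L2_prod_int) (use GL2 vL2 in auto)
  have "(\<integral>\<^sup>+x. (\<integral>\<^sup>+y. ennreal \<bar>G x * v y\<bar> \<partial>m x) \<partial>\<nu>) =
        (\<integral>\<^sup>+x. (\<integral>\<^sup>+y. (\<lambda>p. ennreal \<bar>G (fst p) * v (snd p)\<bar>) (x, y) \<partial>m x) \<partial>\<nu>)" by simp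
  also have "\<dots> = (\<integral>\<^sup>+x. (\<integral>\<^sup>+y. (\<lambda>p. ennreal \<bar>G (fst p) * v (snd p)\<bar>) (y, x) \<partial>m x) \<partial>\<nu>)"
    by (rule sym_nn) measurable
  also have "\<dots> = (\<integral>\<^sup>+x. ennreal (G' x * \<bar>v x\<bar>) \<partial>\<nu>)"
  proof (rule nn_integral_cong)
    fix x
    have "(\<integral>\<^sup>+y. ennreal \<bar>G y * v x\<bar> \<partial>m x) = (\<integral>\<^sup>+y. ennreal (G y) * ennreal \<bar>v x\<bar> \<partial>m x)"
      by (rule nn_integral_cong) (simp add: abs_mult G0 ennreal_mult)
    also have "\<dots> = (\<integral>\<^sup>+y. ennreal (G y) \<partial>m x) * ennreal \<bar>v x\<bar>"
      by (rule nn_integral_multc) simp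
    also have "(\<integral>\<^sup>+y. ennreal (G y) \<partial>m x) = ennreal (G' x)"
      unfolding G' by (rule nn_integral_eq_integral[OF Gm]) (simp add: G0)
    finally show "(\<integral>\<^sup>+y. (\<lambda>p. ennreal \<bar>G (fst p) * v (snd p)\<bar>) (y, x) \<partial>m x) = ennreal (G' x * \<bar>v x\<bar>)"
      by (simp add: ennreal_mult G'0)
  qed
  also have "\<dots> = ennreal (\<integral>x. G' x * \<bar>v x\<bar> \<partial>\<nu>)"
    by (rule nn_integral_eq_integral[OF G'v]) (simp add: G'0)
  finally have fin: "(\<integral>\<^sup>+x. (\<integral>\<^sup>+y. ennreal \<bar>(\<lambda>p. G (fst p) * v (snd p)) (x, y)\<bar> \<partial>m x) \<partial>\<nu>) < \<infinity>"
    by simp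
  have sym: "(\<integral>x. (\<integral>y. (\<lambda>p. G (fst p) * v (snd p)) (x, y) \<partial>m x) \<partial>\<nu>) =
             (\<integral>x. (\<integral>y. (\<lambda>p. G (fst p) * v (snd p)) (y, x) \<partial>m x) \<partial>\<nu>)"
    by (rule sym_int[OF _ fin]) measurable
  have sym': "(\<integral>x. G x * (\<integral>y. v y \<partial>m x) \<partial>\<nu>) = (\<integral>x. G' x * v x \<partial>\<nu>)"
    using sym by (simp add: G')
  have GPv: "integrable \<nu> (\<lambda>x. G x * (\<integral>y. v y \<partial>m x))"
  proof (rule integrableI_bounded)
    show "(\<lambda>x. G x * (\<integral>y. v y \<partial>m x)) \<in> borel_measurable \<nu>" by simp
    have "(\<integral>\<^sup>+x. ennreal (norm (G x * (\<integral>y. v y \<partial>m x))) \<partial>\<nu>) \<le>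
          (\<integral>\<^sup>+x. (\<integral>\<^sup>+y. ennreal \<bar>G x * v y\<bar> \<partial>m x) \<partial>\<nu>)"
    proof (rule nn_integral_mono)
      fix x
      have b: "ennreal \<bar>\<integral>y. v y \<partial>m x\<bar> \<le> (\<integral>\<^sup>+y. ennreal \<bar>v y\<bar> \<partial>m x)"
      proof (cases "integrable (m x) v")
        case True
        then show ?thesis using integral_norm_bound_ennreal[OF True] by simp
      next
        case False
        then show ?thesis by (simp add: not_integrable_integral_eq)
      qed
      have "ennreal (norm (G x * (\<integral>y. v y \<partial>m x))) = ennreal (G x) * ennreal \<bar>\<integral>y. v y \<partial>m x\<bar>"
        by (simp add: abs_mult G0 ennreal_mult)
      also have "\<dots> \<le> ennreal (G x) * (\<integral>\<^sup>+y. ennreal \<bar>v y\<bar> \<partial>m x)"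
        by (rule mult_left_mono[OF b]) simp
      also have "\<dots> = (\<integral>\<^sup>+y. ennreal (G x) * ennreal \<bar>v y\<bar> \<partial>m x)"
        by (rule nn_integral_cmult[symmetric]) simp
      also have "\<dots> = (\<integral>\<^sup>+y. ennreal \<bar>G x * v y\<bar> \<partial>m x)"
        by (rule nn_integral_cong) (simp add: abs_mult G0 ennreal_mult)
      finally show "ennreal (norm (G x * (\<integral>y. v y \<partial>m x))) \<le> (\<integral>\<^sup>+y. ennreal \<bar>G x * v y\<bar> \<partial>m x)" .
    qed
    also have "\<dots> < \<infinity>" using fin by simp
    finally show "(\<integral>\<^sup>+x. ennreal (norm (G x * (\<integral>y. v y \<partial>m x))) \<partial>\<nu>) < \<infinity>" .
  qed
  have "(\<integral>x. G x * laplacian_m m v x \<partial>\<nu>) = (\<integral>x. G x * (\<integral>y. v y \<partial>m x) - G x * v x \<partial>\<nu>)"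
  proof (rule integral_cong_AE)
    show "AE x in \<nu>. G x * laplacian_m m v x = G x * (\<integral>y. v y \<partial>m x) - G x * v x"
      using L2_ae_int[OF _ vL2] by (rule AE_mp) (auto simp: lap_eq right_diff_distrib)
  qed auto
  also have "\<dots> = (\<integral>x. G x * (\<integral>y. v y \<partial>m x) \<partial>\<nu>) - (\<integral>x. G x * v x \<partial>\<nu>)"
    by (rule Bochner_Integration.integral_diff[OF GPv Gv])
  finally show ?thesis using sym' by simp
qed

end

locale hf = mrw +
  fixes u0 :: "'a \<Rightarrow> real" and u :: "real \<Rightarrow> 'a \<Rightarrow> real"
  assumes hf: "heat_flow m \<nu> u0 u"
begin

abbreviation L where "L s \<equiv> laplacian_m m (u s)"
definition W where "W r s x = (u r x - u s x) / (r - s) - L s x"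

lemma u_meas[measurable]: "0 \<le> s \<Longrightarrow> u s \<in> borel_measurable borel"
  using hf unfolding heat_flow_def L2_fun_def by simp

lemma uL2: "0 \<le> s \<Longrightarrow> integrable \<nu> (\<lambda>x. (u s x)\<^sup>2)"
  using hf unfolding heat_flow_def L2_fun_def by simp

lemma u0ae: "AE x in \<nu>. u 0 x = u0 x"
  using hf unfolding heat_flow_def by simp

lemma L_meas[measurable]: "0 \<le> s \<Longrightarrow> L s \<in> borel_measurable borel"
  by (rule lap_meas) (rule u_meas)

lemma W_meas[measurable]: "0 \<le> r \<Longrightarrow> 0 \<le> s \<Longrightarrow> W r s \<in> borel_measurable borel"
  unfolding W_def[abs_def] by measurable

lemma tend: "0 \<le> s \<Longrightarrow> ((\<lambda>r. \<integral>\<^sup>+x. ennreal ((W r s x)\<^sup>2) \<partial>\<nu>) \<longlongrightarrow> 0) (at s within {0..})"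
  using hf unfolding heat_flow_def W_def by simp

lemma ev_fin: assumes "0 \<le> s"
  shows "\<exists>d>0. \<forall>r. 0 \<le> r \<and> r \<noteq> s \<and> \<bar>r - s\<bar> < d \<longrightarrow> (\<integral>\<^sup>+x. ennreal ((W r s x)\<^sup>2) \<partial>\<nu>) < 1"
proof -
  have "eventually (\<lambda>r. (\<integral>\<^sup>+x. ennreal ((W r s x)\<^sup>2) \<partial>\<nu>) < 1) (at s within {0..})"
    by (rule order_tendstoD(2)[OF tend[OF assms]]) simp
  then show ?thesis unfolding eventually_at by (auto simp: dist_real_def)
qed

lemma W_L2: assumes "0 \<le> r" "0 \<le> s" "(\<integral>\<^sup>+x. ennreal ((W r s x)\<^sup>2) \<partial>\<nu>) < 1"
  shows "integrable \<nu> (\<lambda>x. (W r s x)\<^sup>2)"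
  by (rule nn_fin_int) (use assms in \<open>auto intro: less_trans\<close>)

lemma lapL2: assumes s: "0 \<le> s" shows "integrable \<nu> (\<lambda>x. (L s x)\<^sup>2)"
proof -
  obtain d where d: "d > 0" "\<And>r. 0 \<le> r \<and> r \<noteq> s \<and> \<bar>r - s\<bar> < d \<Longrightarrow> (\<integral>\<^sup>+x. ennreal ((W r s x)\<^sup>2) \<partial>\<nu>) < 1"
    using ev_fin[OF s] by blast
  define r where "r = s + d / 2"
  have r: "0 \<le> r" "r \<noteq> s" "\<bar>r - s\<bar> < d" using d s by (auto simp: r_def)
  have WL2: "integrable \<nu> (\<lambda>x. (W r s x)\<^sup>2)" using W_L2 r s d by blast
  have qL2: "integrable \<nu> (\<lambda>x. (1 / (r - s) * (u r x - u s x))\<^sup>2)"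
    by (rule L2_cmult, rule L2_diff) (use uL2 r s in auto)
  have "integrable \<nu> (\<lambda>x. (1 / (r - s) * (u r x - u s x) - W r s x)\<^sup>2)"
    by (rule L2_diff) (use qL2 WL2 r s in auto)
  moreover have "1 / (r - s) * (u r x - u s x) - W r s x = L s x" for x
    unfolding W_def by simp
  ultimately show ?thesis by simp
qed

lemma locbound: assumes s: "0 \<le> s"
  shows "\<exists>d>0. \<exists>M. \<forall>r. 0 \<le> r \<and> \<bar>r - s\<bar> < d \<longrightarrow> (\<integral>x. (u r x)\<^sup>2 \<partial>\<nu>) \<le> M"
proof -
  obtain d where d: "d > 0" "\<And>r. 0 \<le> r \<and> r \<noteq> s \<and> \<bar>r - s\<bar> < d \<Longrightarrow> (\<integral>\<^sup>+x. ennreal ((W r s x)\<^sup>2) \<partial>\<nu>) < 1"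
    using ev_fin[OF s] by blast
  define M where "M = 3 * ((\<integral>x. (u s x)\<^sup>2 \<partial>\<nu>) + 1 + (\<integral>x. (L s x)\<^sup>2 \<partial>\<nu>))"
  have LL: "integrable \<nu> (\<lambda>x. (L s x)\<^sup>2)" using lapL2[OF s] .
  have "0 \<le> (\<integral>x. (L s x)\<^sup>2 \<partial>\<nu>)" by (simp add: integral_nonneg_AE)
  have "(\<integral>x. (u r x)\<^sup>2 \<partial>\<nu>) \<le> M" if r: "0 \<le> r" "\<bar>r - s\<bar> < min d 1" for r
  proof (cases "r = s")
    case True
    have "0 \<le> (\<integral>x. (L s x)\<^sup>2 \<partial>\<nu>)" by (simp add: integral_nonneg_AE)
    moreover have "0 \<le> (\<integral>x. (u s x)\<^sup>2 \<partial>\<nu>)" by (simp add: integral_nonneg_AE)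
    ultimately show ?thesis using True by (simp add: M_def)
  next
    case False
    have fin: "(\<integral>\<^sup>+x. ennreal ((W r s x)\<^sup>2) \<partial>\<nu>) < 1" using d r False by auto
    have WL2: "integrable \<nu> (\<lambda>x. (W r s x)\<^sup>2)" using W_L2 fin r s by blast
    have W1: "(\<integral>x. (W r s x)\<^sup>2 \<partial>\<nu>) < 1"
      using fin nn_integral_eq_integral[OF WL2] by simp
    have pw: "(u r x)\<^sup>2 \<le> 3 * ((u s x)\<^sup>2 + (W r s x)\<^sup>2 + (L s x)\<^sup>2)" for x
    proof -
      define h where "h = r - s"
      have h: "\<bar>h\<bar> < 1" "h \<noteq> 0" using r False by (auto simp: h_def)
      have eq: "u r x = u s x + h * W r s x + h * L s x"
        using h unfolding W_def h_def by (simp add: field_simps)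
      have h2: "h\<^sup>2 \<le> 1" using h by (simp add: abs_square_le_1)
      have a: "(h * W r s x)\<^sup>2 \<le> (W r s x)\<^sup>2"
        using mult_right_mono[OF h2, of "(W r s x)\<^sup>2"] by (simp add: power_mult_distrib)
      have b: "(h * L s x)\<^sup>2 \<le> (L s x)\<^sup>2"
        using mult_right_mono[OF h2, of "(L s x)\<^sup>2"] by (simp add: power_mult_distrib)
      have c: "(p + q + w)\<^sup>2 \<le> 3 * (p\<^sup>2 + q\<^sup>2 + w\<^sup>2)" for p q w :: real
        using sum_squares_bound[of p q] sum_squares_bound[of p w] sum_squares_bound[of q w]
        by (simp add: power2_sum algebra_simps)
      show ?thesis using c[of "u s x" "h * W r s x" "h * L s x"] a b eq by simp
    qed
    have "(\<integral>x. (u r x)\<^sup>2 \<partial>\<nu>) \<le> (\<integral>x. 3 * ((u s x)\<^sup>2 + (W r s x)\<^sup>2 + (L s x)\<^sup>2) \<partial>\<nu>)"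
      by (rule integral_mono) (use uL2 r s WL2 LL pw in auto)
    also have "\<dots> = 3 * ((\<integral>x. (u s x)\<^sup>2 \<partial>\<nu>) + (\<integral>x. (W r s x)\<^sup>2 \<partial>\<nu>) + (\<integral>x. (L s x)\<^sup>2 \<partial>\<nu>))"
      using uL2[OF s] WL2 LL by simp
    also have "\<dots> \<le> M" using W1 unfolding M_def by simp
    finally show ?thesis .
  qed
  then show ?thesis using d(1) by (intro exI[of _ "min d 1"]) auto
qed

lemma globbound: "\<exists>B. \<forall>r\<in>{0..t}. (\<integral>x. (u r x)\<^sup>2 \<partial>\<nu>) \<le> B"
proof -
  have "\<forall>s. \<exists>d M. 0 \<le> s \<longrightarrow> d > 0 \<and> (\<forall>r. 0 \<le> r \<and> \<bar>r - s\<bar> < d \<longrightarrow> (\<integral>x. (u r x)\<^sup>2 \<partial>\<nu>) \<le> M)"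
    using locbound by blast
  then obtain dd MM where dM: "\<And>s. 0 \<le> s \<Longrightarrow> dd s > 0"
    "\<And>s r. 0 \<le> s \<Longrightarrow> 0 \<le> r \<Longrightarrow> \<bar>r - s\<bar> < dd s \<Longrightarrow> (\<integral>x. (u r x)\<^sup>2 \<partial>\<nu>) \<le> MM s"
    by metis
  have cov: "{0..t} \<subseteq> (\<Union>s\<in>{0..t}. ball s (dd s))"
    using dM(1) by force
  obtain C where C: "C \<subseteq> {0..t}" "finite C" "{0..t} \<subseteq> (\<Union>s\<in>C. ball s (dd s))"
    using compactE_image[OF compact_Icc[of 0 t] _ cov] by blast
  have "(\<integral>x. (u r x)\<^sup>2 \<partial>\<nu>) \<le> (\<Sum>s\<in>C. \<bar>MM s\<bar>)" if r: "r \<in> {0..t}" for r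
  proof -
    obtain s where s: "s \<in> C" "r \<in> ball s (dd s)" using C(3) r by blast
    have "(\<integral>x. (u r x)\<^sup>2 \<partial>\<nu>) \<le> MM s"
      using dM(2)[of s r] s C(1) r by (auto simp: dist_real_def abs_minus_commute)
    also have "\<dots> \<le> \<bar>MM s\<bar>" by simp
    also have "\<dots> \<le> (\<Sum>s\<in>C. \<bar>MM s\<bar>)" by (rule member_le_sum) (use s C in auto)
    finally show ?thesis .
  qed
  then show ?thesis by blast
qed

lemma deriv_a:
  fixes G :: "'a \<Rightarrow> real"
  assumes [measurable]: "G \<in> borel_measurable borel" and GL2: "integrable \<nu> (\<lambda>x. (G x)\<^sup>2)" and s: "0 \<le> s"
  shows "((\<lambda>r. \<integral>x. G x * u r x \<partial>\<nu>) has_real_derivative (\<integral>x. G x * L s x \<partial>\<nu>)) (at s within {0..})"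
proof -
  define a where "a r = (\<integral>x. G x * u r x \<partial>\<nu>)" for r
  define D where "D = (\<integral>x. G x * L s x \<partial>\<nu>)"
  define g where "g r = sqrt ((\<integral>x. (G x)\<^sup>2 \<partial>\<nu>) * enn2real (\<integral>\<^sup>+x. ennreal ((W r s x)\<^sup>2) \<partial>\<nu>))" for r
  obtain d where d: "d > 0" "\<And>r. 0 \<le> r \<and> r \<noteq> s \<and> \<bar>r - s\<bar> < d \<Longrightarrow> (\<integral>\<^sup>+x. ennreal ((W r s x)\<^sup>2) \<partial>\<nu>) < 1"
    using ev_fin[OF s] by blast
  have GL: "integrable \<nu> (\<lambda>x. G x * L s x)" by (rule L2_prod_int) (use GL2 lapL2[OF s] L_meas[OF s] in auto)
  have Gu: "0 \<le> r \<Longrightarrow> integrable \<nu> (\<lambda>x. G x * u r x)" for r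
    by (rule L2_prod_int) (use GL2 uL2 in auto)
  have ev: "eventually (\<lambda>r. norm ((a r - a s) / (r - s) - D) \<le> g r) (at s within {0..})"
    unfolding eventually_at
  proof (intro exI[of _ d] conjI ballI impI)
    show "d > 0" by fact
    fix r :: real assume r: "r \<in> {0..}" "r \<noteq> s \<and> dist r s < d"
    have fin: "(\<integral>\<^sup>+x. ennreal ((W r s x)\<^sup>2) \<partial>\<nu>) < 1" using d r by (auto simp: dist_real_def)
    have WL2: "integrable \<nu> (\<lambda>x. (W r s x)\<^sup>2)" using W_L2 fin r s by auto
    have eq: "(a r - a s) / (r - s) - D = (\<integral>x. G x * W r s x \<partial>\<nu>)"
    proof -
      have "(\<integral>x. G x * W r s x \<partial>\<nu>) = (\<integral>x. (G x * u r x - G x * u s x) / (r - s) - G x * L s x \<partial>\<nu>)"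
        unfolding W_def by (rule Bochner_Integration.integral_cong) (auto simp: field_simps)
      also have "\<dots> = (\<integral>x. (G x * u r x - G x * u s x) / (r - s) \<partial>\<nu>) - D"
        unfolding D_def by (rule Bochner_Integration.integral_diff) (use Gu r s GL in auto)
      also have "(\<integral>x. (G x * u r x - G x * u s x) / (r - s) \<partial>\<nu>) = (a r - a s) / (r - s)"
        unfolding a_def using Gu r s by simp
      finally show ?thesis by simp
    qed
    have "(\<integral>x. G x * W r s x \<partial>\<nu>)\<^sup>2 \<le> (\<integral>x. (G x)\<^sup>2 \<partial>\<nu>) * (\<integral>x. (W r s x)\<^sup>2 \<partial>\<nu>)"
      by (rule CS_real) (use GL2 WL2 r s in auto)
    also have "(\<integral>x. (W r s x)\<^sup>2 \<partial>\<nu>) = enn2real (\<integral>\<^sup>+x. ennreal ((W r s x)\<^sup>2) \<partial>\<nu>)"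
      by (rule integral_eq_nn_integral) (use r s in auto)
    finally have "\<bar>\<integral>x. G x * W r s x \<partial>\<nu>\<bar> \<le> g r"
      unfolding g_def by (rule real_le_rsqrt[of "\<bar>_\<bar>", simplified])
    then show "norm ((a r - a s) / (r - s) - D) \<le> g r" using eq by simp
  qed
  have "(g \<longlongrightarrow> sqrt ((\<integral>x. (G x)\<^sup>2 \<partial>\<nu>) * enn2real 0)) (at s within {0..})"
    unfolding g_def by (intro tendsto_intros) (use tend[OF s] in auto)
  then have "(g \<longlongrightarrow> 0) (at s within {0..})" by simp
  then have "((\<lambda>r. (a r - a s) / (r - s) - D) \<longlongrightarrow> 0) (at s within {0..})"
    by (rule Lim_null_comparison[OF ev])
  then have "((\<lambda>r. (a r - a s) / (r - s)) \<longlongrightarrow> D) (at s within {0..})"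
    by (simp add: Lim_null[symmetric])
  then show ?thesis unfolding a_def D_def has_field_derivative_iff .
qed

end

lemma poly_deriv:
  fixes c :: "nat \<Rightarrow> real"
  shows "((\<lambda>x. \<Sum>i<Suc n. x^i / fact i * c i) has_real_derivative (\<Sum>i<n. x^i / fact i * c (Suc i))) (at x)"
proof -
  have eq: "(\<lambda>x. \<Sum>i<Suc n. x^i / fact i * c i) = (\<lambda>x. c 0 + (\<Sum>i<n. x^Suc i / fact (Suc i) * c (Suc i)))"
    by (rule ext) (subst sum.lessThan_Suc_shift, simp)
  have d: "((\<lambda>x. x^Suc i / fact (Suc i) * c (Suc i)) has_real_derivative x^i / fact i * c (Suc i)) (at x)" for i
  proof -
    have "((\<lambda>x. x^Suc i / fact (Suc i) * c (Suc i)) has_real_derivative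
           (of_nat (Suc i) * x^i) / fact (Suc i) * c (Suc i)) (at x)"
      by (intro derivative_eq_intros) auto
    moreover have "(of_nat (Suc i) * x^i) / fact (Suc i) * c (Suc i) = x^i / fact i * c (Suc i)"
      by (simp add: fact_Suc field_simps del: of_nat_Suc)
    ultimately show ?thesis by simp
  qed
  show ?thesis unfolding eq
    by (intro derivative_eq_intros DERIV_sum d) auto
qed

lemma bound_by_deriv:
  fixes f f' :: "real \<Rightarrow> real"
  assumes t: "0 \<le> t" and f0: "f 0 = 0" and cont: "continuous_on {0..t} f"
    and der: "\<And>x. 0 < x \<Longrightarrow> x < t \<Longrightarrow> (f has_real_derivative f' x) (at x)"
    and b: "\<And>x. 0 < x \<Longrightarrow> x < t \<Longrightarrow> \<bar>f' x\<bar> \<le> C * x^n / fact n"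
  shows "\<bar>f t\<bar> \<le> C * t^Suc n / fact (Suc n)"
proof -
  define h where "h x = C * x^Suc n / fact (Suc n)" for x
  have hd: "(h has_real_derivative C * x^n / fact n) (at x)" for x
  proof -
    have "(h has_real_derivative C * (of_nat (Suc n) * x^n) / fact (Suc n)) (at x)"
      unfolding h_def by (intro derivative_eq_intros) auto
    moreover have "C * (of_nat (Suc n) * x^n) / fact (Suc n) = C * x^n / fact n"
      by (simp add: fact_Suc field_simps del: of_nat_Suc)
    ultimately show ?thesis by simp
  qed
  have hc: "continuous_on {0..t} h" unfolding h_def by (intro continuous_intros) auto
  have "(\<lambda>x. h x - f x) 0 \<le> (\<lambda>x. h x - f x) t"
  proof (rule DERIV_nonneg_imp_increasing_open[OF t])
    fix x assume x: "0 < x" "x < t"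
    show "\<exists>y. DERIV (\<lambda>x. h x - f x) x :> y \<and> 0 \<le> y"
      using DERIV_diff[OF hd der[OF x]] b[OF x] by (intro exI[of _ "C * x^n / fact n - f' x"]) auto
  next
    show "continuous_on {0..t} (\<lambda>x. h x - f x)" using hc cont by (simp add: continuous_on_diff)
  qed
  moreover have "(\<lambda>x. h x + f x) 0 \<le> (\<lambda>x. h x + f x) t"
  proof (rule DERIV_nonneg_imp_increasing_open[OF t])
    fix x assume x: "0 < x" "x < t"
    show "\<exists>y. DERIV (\<lambda>x. h x + f x) x :> y \<and> 0 \<le> y"
      using DERIV_add[OF hd der[OF x]] b[OF x] by (intro exI[of _ "C * x^n / fact n + f' x"]) auto
  next
    show "continuous_on {0..t} (\<lambda>x. h x + f x)" using hc cont by (simp add: continuous_on_add)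
  qed
  moreover have "h 0 = 0" unfolding h_def by simp
  ultimately show ?thesis using f0 unfolding h_def by auto
qed

lemma taylor_family:
  fixes k :: "nat \<Rightarrow> real \<Rightarrow> real"
  assumes bnd: "\<And>j s. 0 \<le> s \<Longrightarrow> s \<le> T \<Longrightarrow> \<bar>k j s\<bar> \<le> C"
    and der: "\<And>j s. 0 \<le> s \<Longrightarrow> (k j has_real_derivative k (Suc j) s) (at s within {0..})"
  shows "0 \<le> t \<Longrightarrow> t \<le> T \<Longrightarrow> \<bar>k j t - (\<Sum>i<n. t^i / fact i * k (j+i) 0)\<bar> \<le> C * t^n / fact n"
proof (induction n arbitrary: j t)
  case 0
  then show ?case using bnd by simp
next
  case (Suc n)
  define f where "f x = k j x - (\<Sum>i<Suc n. x^i / fact i * k (j+i) 0)" for x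
  define f' where "f' x = k (Suc j) x - (\<Sum>i<n. x^i / fact i * k (Suc j+i) 0)" for x
  have f0: "f 0 = 0" unfolding f_def by (subst sum.lessThan_Suc_shift) simp
  have kc: "continuous_on {0..Suc n} (k j)" if "True" for n :: nat by simp
  have kcont: "continuous_on {0..t} (k j)"
  proof -
    have "continuous (at s within {0..t}) (k j)" if "s \<in> {0..t}" for s
      using DERIV_continuous[OF der[of s j]] that continuous_within_subset[of s "{0..}" "k j" "{0..t}"]
      by auto
    then show ?thesis by (simp add: continuous_on_eq_continuous_within)
  qed
  have cont: "continuous_on {0..t} f"
    unfolding f_def by (intro continuous_intros kcont) auto
  have fd: "(f has_real_derivative f' x) (at x)" if x: "0 < x" for x
  proof -
    have "(k j has_real_derivative k (Suc j) x) (at x within {0<..})"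
      by (rule has_field_derivative_subset[OF der]) (use x in auto)
    then have "(k j has_real_derivative k (Suc j) x) (at x)"
      using at_within_open[of x "{0<..}"] x by simp
    then show ?thesis unfolding f_def f'_def
      using DERIV_diff[OF _ poly_deriv[of "\<lambda>i. k (j+i) 0" n x]] by simp
  qed
  have fb: "\<bar>f' x\<bar> \<le> C * x^n / fact n" if "0 < x" "x < t" for x
    unfolding f'_def using Suc.IH[of x "Suc j"] that Suc.prems by simp
  show ?case
    using bound_by_deriv[OF Suc.prems(1) f0 cont fd fb] unfolding f_def by simp
qed


context mrw
begin

definition GG :: "'a set \<Rightarrow> nat \<Rightarrow> 'a \<Rightarrow> real" where
  "GG E j x = measure (mstar m j x) E"

lemma GG_meas[measurable]: "E \<in> sets borel \<Longrightarrow> GG E j \<in> borel_measurable borel"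
  unfolding GG_def measure_def
  by (intro borel_measurable_enn2real measurable_emeasure_kernel[OF mstar_subprob_alg]) auto

lemma GG_ennreal: "E \<in> sets borel \<Longrightarrow> ennreal (GG E j x) = emeasure (mstar m j x) E"
proof -
  assume "E \<in> sets borel"
  interpret prob_space "mstar m j x" by (rule prob_mstar)
  show ?thesis unfolding GG_def by (simp add: emeasure_eq_measure)
qed

lemma GG_01: "0 \<le> GG E j x" "GG E j x \<le> 1"
  unfolding GG_def using prob_space.prob_le_1[OF prob_mstar] by auto

lemma GG_0: "E \<in> sets borel \<Longrightarrow> GG E 0 x = indicator E x"
  unfolding GG_def by (simp add: mstar.simps measure_return)

lemma GG_Suc: assumes E: "E \<in> sets borel" shows "GG E (Suc j) x = (\<integral>y. GG E j y \<partial>m x)"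
proof -
  have int: "integrable (m x) (GG E j)"
  proof -
    interpret prob_space "m x" by (rule prob)
    show ?thesis by (rule integrable_const_bound[where B=1]) (use GG_01 E in auto)
  qed
  have "ennreal (GG E (Suc j) x) = emeasure (m x \<bind> mstar m j) E"
    using GG_ennreal[OF E] mstar_Suc' by simp
  also have "\<dots> = (\<integral>\<^sup>+z. emeasure (mstar m j z) E \<partial>m x)"
    by (rule emeasure_bind[where N=borel]) (use E in auto)
  also have "\<dots> = (\<integral>\<^sup>+z. ennreal (GG E j z) \<partial>m x)" by (simp add: GG_ennreal[OF E])
  also have "\<dots> = ennreal (\<integral>y. GG E j y \<partial>m x)"
    by (rule nn_integral_eq_integral[OF int]) (simp add: GG_01)
  finally show ?thesis using GG_01 by (simp add: integral_nonneg_AE)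
qed

lemma GG_L2: assumes E: "E \<in> sets borel" and fin: "emeasure \<nu> E < \<infinity>"
  shows "integrable \<nu> (\<lambda>x. (GG E j x)\<^sup>2)" "(\<integral>x. (GG E j x)\<^sup>2 \<partial>\<nu>) \<le> measure \<nu> E"
proof -
  have "(\<integral>\<^sup>+x. ennreal ((GG E j x)\<^sup>2) \<partial>\<nu>) \<le> (\<integral>\<^sup>+x. ennreal (GG E j x) \<partial>\<nu>)"
  proof (rule nn_integral_mono)
    fix x
    have "(GG E j x)\<^sup>2 \<le> GG E j x"
      using GG_01[of E j x] by (simp add: power2_eq_square mult_left_le)
    then show "ennreal ((GG E j x)\<^sup>2) \<le> ennreal (GG E j x)" by (rule ennreal_leI)
  qed
  also have "\<dots> = (\<integral>\<^sup>+x. (\<integral>\<^sup>+y. indicator E y \<partial>mstar m j x) \<partial>\<nu>)"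
    using E by (simp add: GG_ennreal)
  also have "\<dots> = (\<integral>\<^sup>+x. indicator E x \<partial>\<nu>)" by (rule inv_nn_n) (use E in simp)
  also have "\<dots> = emeasure \<nu> E" using E by simp
  finally have le: "(\<integral>\<^sup>+x. ennreal ((GG E j x)\<^sup>2) \<partial>\<nu>) \<le> emeasure \<nu> E" .
  then show i: "integrable \<nu> (\<lambda>x. (GG E j x)\<^sup>2)"
    by (intro nn_fin_int) (use fin E in \<open>auto intro: le_less_trans\<close>)
  have "ennreal (\<integral>x. (GG E j x)\<^sup>2 \<partial>\<nu>) \<le> emeasure \<nu> E"
    using le nn_integral_eq_integral[OF i] by simp
  also have "\<dots> = ennreal (measure \<nu> E)" using fin by (simp add: emeasure_eq_ennreal_measure less_top)
  finally show "(\<integral>x. (GG E j x)\<^sup>2 \<partial>\<nu>) \<le> measure \<nu> E"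
    by (simp add: ennreal_le_iff)
qed

end

context hf
begin

lemma k_deriv:
  assumes E: "E \<in> sets borel" and fin: "emeasure \<nu> E < \<infinity>" and s: "0 \<le> s"
  shows "((\<lambda>r. exp r * (\<integral>x. GG E j x * u r x \<partial>\<nu>)) has_real_derivative
          exp s * (\<integral>x. GG E (Suc j) x * u s x \<partial>\<nu>)) (at s within {0..})"
proof -
  have a: "((\<lambda>r. \<integral>x. GG E j x * u r x \<partial>\<nu>) has_real_derivative (\<integral>x. GG E j x * L s x \<partial>\<nu>)) (at s within {0..})"
    by (rule deriv_a) (use E GG_L2[OF E fin] s in auto)
  have eq: "(\<integral>x. GG E j x * L s x \<partial>\<nu>) = (\<integral>x. GG E (Suc j) x * u s x \<partial>\<nu>) - (\<integral>x. GG E j x * u s x \<partial>\<nu>)"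
  proof (rule lap_int)
    fix x show "GG E (Suc j) x = (\<integral>y. GG E j y \<partial>m x)" by (rule GG_Suc[OF E])
  qed (use E GG_L2[OF E fin] s GG_01 uL2[OF s] in auto)
  have e: "(exp has_real_derivative exp s) (at s within {0..})"
    by (rule has_field_derivative_at_within[OF DERIV_exp])
  show ?thesis
    using DERIV_mult[OF e a] unfolding eq by (simp add: algebra_simps)
qed

lemma k_bound:
  assumes E: "E \<in> sets borel" and fin: "emeasure \<nu> E < \<infinity>" and t: "0 \<le> t"
  shows "\<exists>C. \<forall>j s. 0 \<le> s \<longrightarrow> s \<le> t \<longrightarrow> \<bar>exp s * (\<integral>x. GG E j x * u s x \<partial>\<nu>)\<bar> \<le> C"
proof -
  obtain B where B: "\<And>r. r \<in> {0..t} \<Longrightarrow> (\<integral>x. (u r x)\<^sup>2 \<partial>\<nu>) \<le> B" using globbound by blast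
  have i0: "0 \<le> (\<integral>x. (u 0 x)\<^sup>2 \<partial>\<nu>)" by (simp add: integral_nonneg_AE)
  have "(\<integral>x. (u 0 x)\<^sup>2 \<partial>\<nu>) \<le> B" using B[of 0] t by simp
  then have B0: "0 \<le> B" using i0 by linarith
  define C where "C = exp t * sqrt (measure \<nu> E * B)"
  have "\<bar>exp s * (\<integral>x. GG E j x * u s x \<partial>\<nu>)\<bar> \<le> C" if s: "0 \<le> s" "s \<le> t" for j s
  proof -
    have "(\<integral>x. GG E j x * u s x \<partial>\<nu>)\<^sup>2 \<le> (\<integral>x. (GG E j x)\<^sup>2 \<partial>\<nu>) * (\<integral>x. (u s x)\<^sup>2 \<partial>\<nu>)"
      by (rule CS_real) (use E GG_L2[OF E fin] uL2 s in auto)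
    also have "\<dots> \<le> measure \<nu> E * B"
      by (rule mult_mono) (use GG_L2[OF E fin] B s in \<open>auto simp: integral_nonneg_AE\<close>)
    finally have "\<bar>\<integral>x. GG E j x * u s x \<partial>\<nu>\<bar> \<le> sqrt (measure \<nu> E * B)"
      by (rule real_le_rsqrt[of "\<bar>_\<bar>", simplified])
    moreover have "exp s \<le> exp t" using s by simp
    ultimately show ?thesis unfolding C_def abs_mult
      by (intro mult_mono) auto
  qed
  then show ?thesis by blast
qed

lemma positivity:
  assumes u0m[measurable]: "u0 \<in> borel_measurable borel" and u0L2: "integrable \<nu> (\<lambda>x. (u0 x)\<^sup>2)"
    and u0pos: "AE x in \<nu>. 0 \<le> u0 x"
    and D: "D \<in> sets borel" and ND: "emeasure \<nu> (N_set m D) = 0"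
    and eps: "0 < \<epsilon>" "\<And>x. x \<in> D \<Longrightarrow> \<epsilon> \<le> u0 x"
    and t: "0 < t"
  shows "AE x in \<nu>. 0 < u t x"
proof (rule ccontr)
  assume nAE: "\<not> (AE x in \<nu>. 0 < u t x)"
  define Z where "Z = {x. u t x \<le> 0}"
  have [measurable]: "u t \<in> borel_measurable borel" using t by simp
  have Zm: "Z \<in> sets borel" unfolding Z_def by measurable
  have Z0: "emeasure \<nu> Z \<noteq> 0"
    using nAE AE_iff_measurable[of Z \<nu> "\<lambda>x. 0 < u t x"] Zm by (auto simp: Z_def not_less)
  obtain A :: "nat \<Rightarrow> 'a set" where A: "range A \<subseteq> sets \<nu>" "(\<Union>i. A i) = space \<nu>"
    "\<And>i. emeasure \<nu> (A i) \<noteq> \<infinity>"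
    using sigma_finite_measure.sigma_finite[OF sf] by metis
  have Ab: "A i \<in> sets borel" for i using A(1) sets_nu by blast
  have "\<exists>i. emeasure \<nu> (Z \<inter> A i) \<noteq> 0"
  proof (rule ccontr)
    assume "\<not> ?thesis"
    then have "emeasure \<nu> (\<Union>i. Z \<inter> A i) = 0"
      by (intro emeasure_UN_eq_0) (use Zm Ab in auto)
    moreover have "(\<Union>i. Z \<inter> A i) = Z" using A(2) by auto
    ultimately show False using Z0 by simp
  qed
  then obtain i where i: "emeasure \<nu> (Z \<inter> A i) \<noteq> 0" by blast
  define E where "E = Z \<inter> A i"
  have E: "E \<in> sets borel" unfolding E_def using Zm Ab by auto
  have [measurable]: "GG E j \<in> borel_measurable borel" for j using E by simp
  have [measurable]: "u 0 \<in> borel_measurable borel" by simp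
  have Efin: "emeasure \<nu> E < \<infinity>"
    using emeasure_mono[of E "A i" \<nu>] A(3)[of i] Ab by (auto simp: E_def less_top[symmetric] top_unique)
  have Epos: "emeasure \<nu> E \<noteq> 0" using i E_def by simp
  have ENm: "N_set m D \<in> sets borel" by (rule N_set_meas[OF D])
  have "\<exists>j. (\<integral>\<^sup>+x. indicator E x * emeasure (mstar m j x) D \<partial>\<nu>) \<noteq> 0"
  proof (rule ccontr)
    assume "\<not> ?thesis"
    then have z: "\<And>j. (\<integral>\<^sup>+x. indicator E x * emeasure (mstar m j x) D \<partial>\<nu>) = 0" by blast
    have [measurable]: "(\<lambda>x. emeasure (mstar m j x) D) \<in> borel_measurable borel" for j
      using measurable_emeasure_kernel[OF mstar_subprob_alg D] .
    have "(\<integral>\<^sup>+x. (\<Sum>j. indicator E x * emeasure (mstar m (Suc j) x) D) \<partial>\<nu>) =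
          (\<Sum>j. (\<integral>\<^sup>+x. indicator E x * emeasure (mstar m (Suc j) x) D \<partial>\<nu>))"
      by (rule nn_integral_suminf) (use E in auto)
    also have "\<dots> = 0" using z by simp
    finally have "AE x in \<nu>. (\<Sum>j. indicator E x * emeasure (mstar m (Suc j) x) D) = 0"
      by (subst (asm) nn_integral_0_iff_AE) (use E in auto)
    then have "AE x in \<nu>. x \<in> E \<longrightarrow> x \<in> N_set m D"
    proof (rule AE_mp, intro AE_I2 impI)
      fix x assume s: "(\<Sum>j. indicator E x * emeasure (mstar m (Suc j) x) D) = 0" and x: "x \<in> E"
      then have "\<forall>j. emeasure (mstar m (Suc j) x) D = 0"
        using suminf_eq_zero_iff[of "\<lambda>j. emeasure (mstar m (Suc j) x) D"] by simp
      then show "x \<in> N_set m D" unfolding N_set_def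
        by (auto simp: Suc_le_eq gr0_conv_Suc)
    qed
    then have "emeasure \<nu> E \<le> emeasure \<nu> (N_set m D)"
      by (rule emeasure_mono_AE) (use ENm in simp)
    then show False using ND Epos by simp
  qed
  then obtain j0 where j0: "(\<integral>\<^sup>+x. indicator E x * emeasure (mstar m j0 x) D \<partial>\<nu>) \<noteq> 0" by blast
  have j0': "(\<integral>\<^sup>+x. indicator D x * emeasure (mstar m j0 x) E \<partial>\<nu>) \<noteq> 0"
  proof -
    have "(\<integral>\<^sup>+x. indicator E x * (\<integral>\<^sup>+y. indicator D y \<partial>mstar m j0 x) \<partial>\<nu>) =
          (\<integral>\<^sup>+x. indicator D x * (\<integral>\<^sup>+y. indicator E y \<partial>mstar m j0 x) \<partial>\<nu>)"
      by (rule sym_n) (use E D in auto)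
    then show ?thesis using j0 E D by simp
  qed
  define k where "k j s = exp s * (\<integral>x. GG E j x * u s x \<partial>\<nu>)" for j s
  obtain C where C: "\<And>j s. 0 \<le> s \<Longrightarrow> s \<le> t \<Longrightarrow> \<bar>k j s\<bar> \<le> C"
    using k_bound[OF E Efin less_imp_le[OF t]] unfolding k_def by auto
  have kd: "\<And>j s. 0 \<le> s \<Longrightarrow> (k j has_real_derivative k (Suc j) s) (at s within {0..})"
    unfolding k_def[abs_def] by (rule k_deriv[OF E Efin])
  have tay: "\<bar>k 0 t - (\<Sum>i<n. t^i / fact i * k (0+i) 0)\<bar> \<le> C * t^n / fact n" for n
    by (rule taylor_family[where T=t and k=k and C=C and j=0, OF C kd]) (use t in auto)
  have GGu0: "integrable \<nu> (\<lambda>x. GG E j x * u0 x)" for j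
    by (rule L2_prod_int) (use E GG_L2[OF E Efin] u0L2 in auto)
  have k0: "k j 0 = (\<integral>x. GG E j x * u0 x \<partial>\<nu>)" for j
    unfolding k_def using u0ae by (auto intro!: integral_cong_AE)
  have kpos: "0 \<le> k j 0" for j
    unfolding k0 using u0pos by (auto intro!: integral_nonneg_AE simp: GG_01)
  have kj0: "0 < k j0 0"
  proof -
    have "(\<integral>x. GG E j0 x * u0 x \<partial>\<nu>) \<noteq> 0"
    proof
      assume "(\<integral>x. GG E j0 x * u0 x \<partial>\<nu>) = 0"
      moreover have nn: "AE x in \<nu>. 0 \<le> GG E j0 x * u0 x"
        using u0pos by eventually_elim (simp add: GG_01)
      ultimately have "AE x in \<nu>. GG E j0 x * u0 x = 0"
        using integral_nonneg_eq_0_iff_AE[OF GGu0 nn] by simp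
      then have "AE x in \<nu>. indicator D x * emeasure (mstar m j0 x) E = 0"
      proof (rule AE_mp, intro AE_I2 impI)
        fix x assume "GG E j0 x * u0 x = 0"
        then have "x \<in> D \<Longrightarrow> GG E j0 x = 0" using eps by (metis mult_eq_0_iff not_le order.strict_trans2)
        then show "indicator D x * emeasure (mstar m j0 x) E = 0"
          using GG_ennreal[OF E, of j0 x] by (auto simp: indicator_def)
      qed
      then have "(\<integral>\<^sup>+x. indicator D x * emeasure (mstar m j0 x) E \<partial>\<nu>) = 0"
        by (subst nn_integral_0_iff_AE) (use D measurable_emeasure_kernel[OF mstar_subprob_alg E] in auto)
      then show False using j0' by simp
    qed
    then show ?thesis using kpos[of j0] unfolding k0 by simp
  qed
  define c where "c = t^j0 / fact j0 * k j0 0"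
  have c: "0 < c" unfolding c_def using kj0 t by simp
  have sum_ge: "c \<le> (\<Sum>i<n. t^i / fact i * k i 0)" if "j0 < n" for n
    unfolding c_def by (rule member_le_sum[where f="\<lambda>i. t^i / fact i * k i 0"]) (use that t kpos in auto)
  have lim: "(\<lambda>n. C * (t^n / fact n)) \<longlonglongrightarrow> 0"
  proof -
    have "(\<lambda>n. inverse (fact n) * t^n) \<longlonglongrightarrow> 0" by (rule summable_LIMSEQ_zero[OF summable_exp])
    then have "(\<lambda>n. t^n / fact n) \<longlonglongrightarrow> 0" by (simp add: field_simps)
    then show ?thesis by (intro tendsto_mult_right_zero)
  qed
  have kt: "c \<le> k 0 t"
  proof (rule ccontr)
    assume "\<not> c \<le> k 0 t"
    then have "0 < c - k 0 t" by simp
    from order_tendstoD(2)[OF lim this] have "eventually (\<lambda>n. C * (t^n / fact n) < c - k 0 t) sequentially" .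
    moreover have "eventually (\<lambda>n. j0 < n) sequentially" by (rule eventually_gt_at_top)
    ultimately obtain n where n: "C * (t^n / fact n) < c - k 0 t" "j0 < n"
      using eventually_happens'[of sequentially] by (metis (mono_tags, lifting) eventually_conj_iff eventually_sequentially le_refl)
    have "\<bar>k 0 t - (\<Sum>i<n. t^i / fact i * k i 0)\<bar> \<le> C * t^n / fact n" using tay[of n] by simp
    then have "(\<Sum>i<n. t^i / fact i * k i 0) - C * (t^n / fact n) \<le> k 0 t" by simp
    then show False using n sum_ge[OF n(2)] by simp
  qed
  have "k 0 t \<le> 0"
  proof -
    have "(\<integral>x. GG E 0 x * u t x \<partial>\<nu>) \<le> 0"
    proof -
      have "0 \<le> (\<integral>x. - (GG E 0 x * u t x) \<partial>\<nu>)"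
      proof (rule integral_nonneg_AE, rule AE_I2)
        fix x
        have "GG E 0 x = indicator E x" by (rule GG_0[OF E])
        then show "0 \<le> - (GG E 0 x * u t x)"
          by (auto simp: E_def Z_def indicator_def)
      qed
      then show ?thesis by simp
    qed
    then show ?thesis unfolding k_def by (simp add: mult_nonneg_nonpos)
  qed
  then show False using kt c by simp
qed

end

definition ser :: "(nat \<Rightarrow> real) \<Rightarrow> real \<Rightarrow> real" where
  "ser b t = (\<Sum>n. t^n / fact n * b n)"
definition fb :: "(nat \<Rightarrow> real) \<Rightarrow> real \<Rightarrow> real" where
  "fb b t = exp (- t) * ser b t"
definition dl :: "(nat \<Rightarrow> real) \<Rightarrow> nat \<Rightarrow> real" where
  "dl b n = b (Suc n) - b n"

lemma exp_sums_real: "(\<lambda>n. t^n / fact n) sums exp (t::real)"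
  using exp_converges[of t] by (simp add: divide_inverse mult.commute scaleR_conv_of_real)

lemma ser_summable: fixes b :: "nat \<Rightarrow> real" and t B :: real assumes "\<And>n. \<bar>b n\<bar> \<le> B" shows "summable (\<lambda>n. t^n / fact n * b n)"
proof (rule summable_comparison_test'[where g="\<lambda>n. B * (\<bar>t\<bar>^n / fact n)" and N=0])
  show "summable (\<lambda>n. B * (\<bar>t\<bar>^n / fact n))"
    using exp_sums_real[of "\<bar>t\<bar>"] by (intro summable_mult) (simp add: sums_summable)
  fix n
  have "\<bar>t^n / fact n * b n\<bar> = \<bar>t\<bar>^n / fact n * \<bar>b n\<bar>" by (simp add: abs_mult power_abs)
  also have "\<dots> \<le> \<bar>t\<bar>^n / fact n * B" by (rule mult_left_mono) (use assms in auto)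
  finally show "norm (t^n / fact n * b n) \<le> B * (\<bar>t\<bar>^n / fact n)" by (simp add: mult.commute)
qed

lemma ser_deriv: assumes "\<And>n. \<bar>b n\<bar> \<le> B"
  shows "(ser b has_real_derivative ser (\<lambda>n. b (Suc n)) t) (at t)"
proof -
  define c where "c n = b n / fact n" for n
  have eq: "ser b = (\<lambda>x. \<Sum>n. c n * x^n)" unfolding ser_def c_def by (rule ext) (simp add: mult.commute)
  have D: "((\<lambda>x. \<Sum>n. c n * x^n) has_real_derivative (\<Sum>n. diffs c n * t^n)) (at t)"
  proof (rule termdiffs_strong_converges_everywhere)
    fix y
    have "summable (\<lambda>n. y^n / fact n * b n)" by (rule ser_summable) (rule assms)
    moreover have "(\<lambda>n. c n * y^n) = (\<lambda>n. y^n / fact n * b n)" by (rule ext) (simp add: c_def)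
    ultimately show "summable (\<lambda>n. c n * y^n)" by simp
  qed
  have dc: "diffs c n = b (Suc n) / fact n" for n
    unfolding diffs_def c_def by (simp add: fact_Suc field_simps del: of_nat_Suc)
  have lam: "(\<lambda>n. diffs c n * t^n) = (\<lambda>n. t^n / fact n * b (Suc n))" by (rule ext) (simp add: dc)
  have X: "(\<Sum>n. diffs c n * t^n) = ser (\<lambda>n. b (Suc n)) t" unfolding ser_def lam ..
  show ?thesis unfolding eq using D[unfolded X] .
qed

lemma dl_bound: assumes "\<And>n. \<bar>b n\<bar> \<le> B" shows "\<bar>dl b n\<bar> \<le> 2 * B"
  using assms[of n] assms[of "Suc n"] unfolding dl_def by linarith

lemma fb_deriv: assumes "\<And>n. \<bar>b n\<bar> \<le> B"
  shows "(fb b has_real_derivative fb (dl b) t) (at t)"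
proof -
  have s1: "summable (\<lambda>n. t^n / fact n * b (Suc n))" by (rule ser_summable) (use assms in auto)
  have s2: "summable (\<lambda>n. t^n / fact n * b n)" by (rule ser_summable) (use assms in auto)
  have "((\<lambda>t. exp (- t) * ser b t) has_real_derivative
      (exp (- t) * (- 1)) * ser b t + exp (- t) * ser (\<lambda>n. b (Suc n)) t) (at t)"
  proof -
    have e: "((\<lambda>t. exp (- t)) has_real_derivative exp (- t) * (- 1)) (at t)"
      by (intro derivative_eq_intros) auto
    have sd: "(ser b has_real_derivative ser (\<lambda>n. b (Suc n)) t) (at t)" by (rule ser_deriv) (rule assms)
    show ?thesis using DERIV_mult[OF e sd] by (simp add: mult.commute)
  qed
  moreover have "(exp (- t) * (- 1)) * ser b t + exp (- t) * ser (\<lambda>n. b (Suc n)) t = fb (dl b) t"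
  proof -
    have "ser (\<lambda>n. b (Suc n)) t - ser b t = ser (dl b) t"
      unfolding ser_def dl_def using suminf_diff[OF s1 s2] by (simp add: right_diff_distrib)
    then show ?thesis unfolding fb_def by (simp add: algebra_simps)
  qed
  ultimately show ?thesis unfolding fb_def[abs_def] by simp
qed

lemma dl_pow_bound: assumes "\<And>n. \<bar>b n\<bar> \<le> B" shows "\<bar>(dl ^^ k) b n\<bar> \<le> 2^k * B"
proof (induction k arbitrary: n)
  case 0
  then show ?case using assms by simp
next
  case (Suc k)
  then show ?case using dl_bound[of "(dl ^^ k) b" "2^k * B" n] by simp
qed

lemma fb_taylor: assumes b: "\<And>n. \<bar>b n\<bar> \<le> B" and st: "s \<noteq> t"
  shows "\<exists>\<xi>. min s t \<le> \<xi> \<and> \<xi> \<le> max s t \<and>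
     fb b s = fb b t + fb (dl b) t * (s - t) + fb (dl (dl b)) \<xi> / 2 * (s - t)\<^sup>2"
proof -
  define diff where "diff m = fb ((dl ^^ m) b)" for m
  have "\<exists>\<xi>. (if s < t then s < \<xi> \<and> \<xi> < t else t < \<xi> \<and> \<xi> < s) \<and>
     fb b s = (\<Sum>m<2. (diff m t / fact m) * (s - t)^m) + (diff 2 \<xi> / fact 2) * (s - t)^2"
  proof (rule Taylor[where a="min s t" and b="max s t"])
    show "\<forall>m x. m < 2 \<and> min s t \<le> x \<and> x \<le> max s t \<longrightarrow> DERIV (diff m) x :> diff (Suc m) x"
    proof (intro allI impI)
      fix m :: nat and x :: real assume "m < 2 \<and> min s t \<le> x \<and> x \<le> max s t"
      have "\<bar>(dl ^^ m) b n\<bar> \<le> 2^m * B" for n by (rule dl_pow_bound) (rule b)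
      then have "(fb ((dl ^^ m) b) has_real_derivative fb (dl ((dl ^^ m) b)) x) (at x)" by (rule fb_deriv)
      then show "DERIV (diff m) x :> diff (Suc m) x" unfolding diff_def by simp
    qed
  qed (use st in \<open>auto simp: diff_def\<close>)
  then obtain \<xi> where "(if s < t then s < \<xi> \<and> \<xi> < t else t < \<xi> \<and> \<xi> < s)"
     "fb b s = (\<Sum>m<2. (diff m t / fact m) * (s - t)^m) + (diff 2 \<xi> / fact 2) * (s - t)^2" by blast
  then show ?thesis
    by (intro exI[of _ \<xi>]) (auto simp: diff_def numeral_2_eq_2 split: if_splits)
qed

lemma ser_abs_bound:
  assumes d: "\<And>n. \<bar>d n\<bar> \<le> c n" and c: "\<And>n. \<bar>c n\<bar> \<le> B" and xi: "0 \<le> \<xi>" "\<xi> \<le> T"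
  shows "\<bar>ser d \<xi>\<bar> \<le> ser c T"
proof -
  have sc: "summable (\<lambda>n. T^n / fact n * c n)" by (rule ser_summable) (rule c)
  have le: "\<bar>\<xi>^n / fact n * d n\<bar> \<le> T^n / fact n * c n" for n
  proof -
    have "\<bar>\<xi>^n / fact n * d n\<bar> = \<xi>^n / fact n * \<bar>d n\<bar>" using xi by (simp add: abs_mult)
    also have "\<dots> \<le> T^n / fact n * c n"
      by (intro mult_mono divide_right_mono power_mono d) (use xi d[of n] in auto)
    finally show ?thesis .
  qed
  have sa: "summable (\<lambda>n. \<bar>\<xi>^n / fact n * d n\<bar>)"
    by (rule summable_comparison_test'[OF sc, of 0]) (use le in auto)
  have "\<bar>ser d \<xi>\<bar> \<le> (\<Sum>n. \<bar>\<xi>^n / fact n * d n\<bar>)" unfolding ser_def by (rule summable_rabs[OF sa])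
  also have "\<dots> \<le> ser c T" unfolding ser_def by (rule suminf_le[OF le sa sc])
  finally show ?thesis .
qed

lemma ser_nonneg: assumes "\<And>n. 0 \<le> b n" "\<And>n. \<bar>b n\<bar> \<le> B" "0 \<le> t" shows "0 \<le> ser b t"
proof -
  have "summable (\<lambda>n. t^n / fact n * b n)" by (rule ser_summable) (rule assms(2))
  then show ?thesis unfolding ser_def by (rule suminf_nonneg) (use assms in auto)
qed

lemma ser_mono_const: assumes "\<And>n. b n \<le> B" "\<And>n. \<bar>b n\<bar> \<le> B" "0 \<le> t" shows "ser b t \<le> B * exp t"
proof -
  have "ser b t \<le> (\<Sum>n. t^n / fact n * B)"
  proof (unfold ser_def, rule suminf_le)
    fix n show "t^n / fact n * b n \<le> t^n / fact n * B" by (rule mult_left_mono) (use assms in auto)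
  next
    show "summable (\<lambda>n. t^n / fact n * b n)" by (rule ser_summable) (rule assms(2))
    show "summable (\<lambda>n. t^n / fact n * B)" by (rule ser_summable[where B="\<bar>B\<bar>"]) simp
  qed
  also have "(\<Sum>n. t^n / fact n * B) = exp t * B"
    using sums_mult2[OF exp_sums_real[of t], of B] by (simp add: sums_iff)
  finally show ?thesis by (simp add: mult.commute)
qed

lemma ser_zero: "ser b 0 = b 0"
proof -
  have "ser b 0 = (\<Sum>n. (b n / fact n) * 0^n)" unfolding ser_def by (simp add: field_simps)
  also have "\<dots> = b 0" by (subst powser_zero) simp
  finally show ?thesis .
qed


lemma ser_summable_norm: fixes b :: "nat \<Rightarrow> real" and t B :: real assumes "\<And>n. \<bar>b n\<bar> \<le> B"
  shows "summable (\<lambda>n. norm (t^n / fact n * b n))"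
proof (rule summable_comparison_test'[where g="\<lambda>n. B * (\<bar>t\<bar>^n / fact n)" and N=0])
  show "summable (\<lambda>n. B * (\<bar>t\<bar>^n / fact n))"
    using exp_sums_real[of "\<bar>t\<bar>"] by (intro summable_mult) (simp add: sums_summable)
  fix n
  have "\<bar>t^n / fact n * b n\<bar> = \<bar>t\<bar>^n / fact n * \<bar>b n\<bar>" by (simp add: abs_mult power_abs)
  also have "\<dots> \<le> \<bar>t\<bar>^n / fact n * B" by (rule mult_left_mono) (use assms in auto)
  finally show "norm (norm (t^n / fact n * b n)) \<le> B * (\<bar>t\<bar>^n / fact n)" by (simp add: mult.commute)
qed

lemma ser_dl: fixes b :: "nat \<Rightarrow> real" assumes "\<And>n. \<bar>b n\<bar> \<le> B"
  shows "ser (\<lambda>n. b (Suc n)) t - ser b t = ser (dl b) t"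
proof -
  have s1: "summable (\<lambda>n. t^n / fact n * b (Suc n))" by (rule ser_summable) (use assms in auto)
  have s2: "summable (\<lambda>n. t^n / fact n * b n)" by (rule ser_summable) (use assms in auto)
  show ?thesis unfolding ser_def dl_def using suminf_diff[OF s1 s2] by (simp add: right_diff_distrib)
qed

context mrw
begin

lemma nn_ser_bound:
  fixes bx :: "nat \<Rightarrow> 'a \<Rightarrow> real"
  assumes meas[measurable]: "\<And>n. bx n \<in> borel_measurable borel"
    and nonneg: "\<And>n x. 0 \<le> bx n x" and bnd: "\<And>n x. bx n x \<le> B"
    and int: "\<And>n. (\<integral>\<^sup>+ x. ennreal (bx n x) \<partial>\<nu>) \<le> V" and T: "0 \<le> T"
  shows "(\<integral>\<^sup>+x. ennreal (ser (\<lambda>n. bx n x) T) \<partial>\<nu>) \<le> ennreal (exp T) * V"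
proof -
  have ab: "\<bar>bx n x\<bar> \<le> B" for n x using nonneg[of n x] bnd[of n x] by simp
  have eq: "ennreal (ser (\<lambda>n. bx n x) T) = (\<Sum>n. ennreal (T^n / fact n * bx n x))" for x
    unfolding ser_def
    by (rule suminf_ennreal2[symmetric]) (use nonneg T ser_summable[of "\<lambda>n. bx n x" B T] ab in auto)
  have "(\<integral>\<^sup>+x. ennreal (ser (\<lambda>n. bx n x) T) \<partial>\<nu>) = (\<Sum>n. (\<integral>\<^sup>+x. ennreal (T^n / fact n * bx n x) \<partial>\<nu>))"
    unfolding eq by (rule nn_integral_suminf) simp
  also have "\<dots> \<le> (\<Sum>n. ennreal (T^n / fact n) * V)"
  proof (rule suminf_le[OF _ summableI summableI])
    fix n
    have "(\<integral>\<^sup>+x. ennreal (T^n / fact n * bx n x) \<partial>\<nu>) = (\<integral>\<^sup>+x. ennreal (T^n / fact n) * ennreal (bx n x) \<partial>\<nu>)"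
      by (rule nn_integral_cong, rule ennreal_mult) (use T nonneg in auto)
    also have "\<dots> = ennreal (T^n / fact n) * (\<integral>\<^sup>+x. ennreal (bx n x) \<partial>\<nu>)"
      by (rule nn_integral_cmult) simp
    also have "\<dots> \<le> ennreal (T^n / fact n) * V" by (rule mult_left_mono[OF int]) simp
    finally show "(\<integral>\<^sup>+x. ennreal (T^n / fact n * bx n x) \<partial>\<nu>) \<le> ennreal (T^n / fact n) * V" .
  qed
  also have "\<dots> = (\<Sum>n. ennreal (T^n / fact n)) * V"
    using ennreal_suminf_cmult[of V "\<lambda>n. ennreal (T^n / fact n)"] by (simp add: mult.commute)
  also have "(\<Sum>n. ennreal (T^n / fact n)) = ennreal (exp T)"
    by (rule suminf_ennreal_eq[OF _ exp_sums_real]) (use T in simp)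
  finally show ?thesis .
qed

lemma DN_null: assumes D: "D \<in> sets borel" shows "emeasure \<nu> (D \<inter> N_set m D) = 0"
proof -
  define F where "F = D \<inter> N_set m D"
  have F: "F \<in> sets borel" unfolding F_def using N_set_meas[OF D] D by auto
  define h where "h x = emeasure (m x) F" for x
  have hm[measurable]: "h \<in> borel_measurable borel" unfolding h_def by (rule meas_m[OF F])
  have m2: "emeasure (mstar m 2 x) F = (\<integral>\<^sup>+z. h z \<partial>m x)" for x
  proof -
    have "emeasure (mstar m 2 x) F = (\<integral>\<^sup>+y. indicator F y \<partial>mstar m (Suc 1) x)" using F by (simp add: numeral_2_eq_2)
    also have "\<dots> = (\<integral>\<^sup>+z. (\<integral>\<^sup>+y. indicator F y \<partial>mstar m 1 z) \<partial>m x)"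
      by (rule nn_mstar_Suc') (use F in simp)
    also have "\<dots> = (\<integral>\<^sup>+z. h z \<partial>m x)" using F by (simp add: h_def mstar.simps)
    finally show ?thesis .
  qed
  have "(\<integral>\<^sup>+x. indicator F x * (\<integral>\<^sup>+z. h z \<partial>m x) \<partial>\<nu>) = 0"
  proof (rule nn_integral_zero')
    show "AE x in \<nu>. indicator F x * (\<integral>\<^sup>+z. h z \<partial>m x) = 0"
    proof (rule AE_I2)
      fix x
      show "indicator F x * (\<integral>\<^sup>+z. h z \<partial>m x) = 0"
      proof (cases "x \<in> F")
        case True
        then have "emeasure (mstar m 2 x) D = 0" unfolding F_def N_set_def by auto
        then have "emeasure (mstar m 2 x) F = 0"
          using emeasure_mono[of F D "mstar m 2 x"] D by (auto simp: F_def)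
        then show ?thesis using m2 by simp
      qed simp
    qed
  qed
  moreover have "(\<integral>\<^sup>+x. indicator F x * (\<integral>\<^sup>+z. h z \<partial>m x) \<partial>\<nu>) = (\<integral>\<^sup>+x. h x * (\<integral>\<^sup>+y. indicator F y \<partial>m x) \<partial>\<nu>)"
    by (rule sym_prod) (use F in simp_all)
  moreover have "(\<integral>\<^sup>+y. indicator F y \<partial>m x) = h x" for x using F by (simp add: h_def sets_m)
  ultimately have "(\<integral>\<^sup>+x. h x * h x \<partial>\<nu>) = 0" by simp
  then have "AE x in \<nu>. h x * h x = 0" by (subst (asm) nn_integral_0_iff_AE) auto
  then have "AE x in \<nu>. h x = 0" by (rule AE_mp) auto
  then have "(\<integral>\<^sup>+x. h x \<partial>\<nu>) = 0" by (subst nn_integral_0_iff_AE) auto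
  moreover have "emeasure \<nu> F = (\<integral>\<^sup>+x. h x \<partial>\<nu>)" unfolding h_def by (rule inv[OF F])
  ultimately show ?thesis by (simp add: F_def)
qed

end

locale constr = mrw +
  fixes D :: "'a set" and u0 :: "'a \<Rightarrow> real"
  assumes D: "D \<in> sets borel" and Dfin: "emeasure \<nu> D < \<infinity>"
    and u0m[measurable]: "u0 \<in> borel_measurable borel"
    and u0nn: "\<And>x. 0 \<le> u0 x" and u0D: "\<And>x. u0 x \<le> indicator D x"
begin

definition aa :: "nat \<Rightarrow> 'a \<Rightarrow> real" where
  "aa n x = (\<integral>y. u0 y \<partial>mstar m n x)"

definition uu :: "real \<Rightarrow> 'a \<Rightarrow> real" where
  "uu t x = fb (\<lambda>n. aa n x) t"

lemma u01: "u0 x \<le> 1" using u0D[of x] by (cases "x \<in> D") auto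

lemma aa_meas[measurable]: "aa n \<in> borel_measurable borel"
proof -
  have "(\<lambda>x. integral\<^sup>L (mstar m n x) u0) \<in> borel_measurable borel"
    by (rule measurable_compose[OF mstar_subprob_alg integral_measurable_subprob_algebra]) simp
  then show ?thesis unfolding aa_def[abs_def] .
qed

lemma aa_int_m: "integrable (mstar m n x) u0"
proof -
  interpret prob_space "mstar m n x" by (rule prob_mstar)
  show ?thesis by (rule integrable_const_bound[where B=1]) (use u0nn u01 in auto)
qed

lemma aa_01: "0 \<le> aa n x" "aa n x \<le> 1"
proof -
  interpret prob_space "mstar m n x" by (rule prob_mstar)
  show "0 \<le> aa n x" unfolding aa_def using u0nn by (simp add: integral_nonneg_AE)
  have "aa n x \<le> (\<integral>y. 1 \<partial>mstar m n x)" unfolding aa_def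
    by (rule integral_mono[OF aa_int_m]) (use u01 in auto)
  moreover have "prob UNIV = 1" using prob_space by simp
  ultimately show "aa n x \<le> 1" by simp
qed

lemma aa_abs: "\<bar>aa n x\<bar> \<le> 1" using aa_01[of n x] by simp

lemma aa_D: "aa n x \<le> measure (mstar m n x) D"
proof -
  interpret prob_space "mstar m n x" by (rule prob_mstar)
  have "aa n x \<le> (\<integral>y. indicator D y \<partial>mstar m n x)" unfolding aa_def
  proof (rule integral_mono[OF aa_int_m])
    show "integrable (mstar m n x) (indicator D :: 'a \<Rightarrow> real)"
      by (rule integrable_real_indicator) (use D emeasure_space_1 in \<open>auto simp: less_top[symmetric]\<close>)
  qed (use u0D in auto)
  then show ?thesis using D by simp
qed

lemma aa_0: "aa 0 x = u0 x"
  unfolding aa_def by (simp add: mstar.simps integral_return)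

lemma aa_Suc: "aa (Suc n) x = (\<integral>y. aa n y \<partial>m x)"
proof -
  have "aa (Suc n) x = (\<integral>y. u0 y \<partial>(m x \<bind> mstar m n))" unfolding aa_def by (simp add: mstar_Suc')
  also have "\<dots> = (\<integral>y. (\<integral>z. u0 z \<partial>mstar m n y) \<partial>m x)"
  proof (rule integral_bind[where K=borel and B=1 and B'=1])
    show "\<And>x. x \<in> space borel \<Longrightarrow> \<bar>u0 x\<bar> \<le> 1" using u0nn u01 by (simp add: abs_le_iff)
    show "finite_measure (m x)" using prob[of x] by (simp add: prob_space_def)
    show "AE y in m x. emeasure (mstar m n y) (space (mstar m n y)) \<le> ennreal 1"
    proof (rule AE_I2)
      fix y
      have "emeasure (mstar m n y) (space (mstar m n y)) = 1" by (rule prob_space.emeasure_space_1[OF prob_mstar])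
      then show "emeasure (mstar m n y) (space (mstar m n y)) \<le> ennreal 1" by simp
    qed
  qed (auto simp: measurable_cong_sets[OF sets_m refl])
  finally show ?thesis unfolding aa_def .
qed

lemma aa_nn: "(\<integral>\<^sup>+x. ennreal (aa n x) \<partial>\<nu>) \<le> emeasure \<nu> D"
proof -
  have "ennreal (aa n x) = (\<integral>\<^sup>+y. ennreal (u0 y) \<partial>mstar m n x)" for x
    unfolding aa_def by (rule nn_integral_eq_integral[OF aa_int_m, symmetric]) (simp add: u0nn)
  then have "(\<integral>\<^sup>+x. ennreal (aa n x) \<partial>\<nu>) = (\<integral>\<^sup>+x. ennreal (u0 x) \<partial>\<nu>)"
    by (simp add: inv_nn_n)
  also have "\<dots> \<le> (\<integral>\<^sup>+x. indicator D x \<partial>\<nu>)"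
  proof (rule nn_integral_mono)
    fix x show "ennreal (u0 x) \<le> indicator D x"
      using u0D[of x] u01[of x] u0nn[of x] by (cases "x \<in> D") (auto intro: ennreal_leI)
  qed
  also have "\<dots> = emeasure \<nu> D" using D by simp
  finally show ?thesis .
qed

end

context constr
begin

lemma uu_meas[measurable]: "uu t \<in> borel_measurable borel"
  unfolding uu_def[abs_def] fb_def ser_def by measurable

lemma ser_aa_01: "0 \<le> t \<Longrightarrow> 0 \<le> ser (\<lambda>n. aa n x) t \<and> ser (\<lambda>n. aa n x) t \<le> exp t"
  using ser_nonneg[of "\<lambda>n. aa n x" 1 t] ser_mono_const[of "\<lambda>n. aa n x" 1 t] aa_01 aa_abs by auto

lemma uu_01: assumes "0 \<le> t" shows "0 \<le> uu t x" "uu t x \<le> 1" "uu t x \<le> ser (\<lambda>n. aa n x) t"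
proof -
  have s: "0 \<le> ser (\<lambda>n. aa n x) t" "ser (\<lambda>n. aa n x) t \<le> exp t" using ser_aa_01 assms by auto
  show "0 \<le> uu t x" unfolding uu_def fb_def using s by simp
  have "exp (- t) * ser (\<lambda>n. aa n x) t \<le> exp (- t) * exp t" using s by (intro mult_left_mono) auto
  then show "uu t x \<le> 1" unfolding uu_def fb_def by (simp add: exp_minus field_simps)
  have "exp (- t) \<le> 1" using assms by simp
  then show "uu t x \<le> ser (\<lambda>n. aa n x) t" unfolding uu_def fb_def
    using mult_right_mono[of "exp (- t)" 1 "ser (\<lambda>n. aa n x) t"] s by simp
qed

lemma ser_aa_nn: "0 \<le> T \<Longrightarrow> (\<integral>\<^sup>+x. ennreal (ser (\<lambda>n. aa n x) T) \<partial>\<nu>) \<le> ennreal (exp T) * emeasure \<nu> D"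
  by (rule nn_ser_bound[where B=1]) (use aa_01 aa_nn in auto)

lemma uu_L2: assumes t: "0 \<le> t" shows "integrable \<nu> (\<lambda>x. (uu t x)\<^sup>2)"
proof (rule nn_fin_int)
  have "(\<integral>\<^sup>+x. ennreal ((uu t x)\<^sup>2) \<partial>\<nu>) \<le> (\<integral>\<^sup>+x. ennreal (ser (\<lambda>n. aa n x) t) \<partial>\<nu>)"
  proof (rule nn_integral_mono, rule ennreal_leI)
    fix x
    have "(uu t x)\<^sup>2 \<le> uu t x" using uu_01[OF t, of x] by (simp add: power2_eq_square mult_left_le)
    then show "(uu t x)\<^sup>2 \<le> ser (\<lambda>n. aa n x) t" using uu_01(3)[OF t, of x] by simp
  qed
  also have "\<dots> \<le> ennreal (exp t) * emeasure \<nu> D" by (rule ser_aa_nn[OF t])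
  also have "\<dots> < \<infinity>" using Dfin by (simp add: ennreal_mult_less_top less_top)
  finally show "(\<integral>\<^sup>+x. ennreal ((uu t x)\<^sup>2) \<partial>\<nu>) < \<infinity>" .
qed simp

lemma uu_0: "uu 0 x = u0 x"
  unfolding uu_def fb_def by (simp add: ser_zero aa_0)

lemma aa_int_mx: "integrable (m x) (aa n)"
proof -
  interpret prob_space "m x" by (rule prob)
  show ?thesis by (rule integrable_const_bound[where B=1]) (use aa_abs in auto)
qed

lemma lap_uu: assumes t: "0 \<le> t" shows "laplacian_m m (uu t) x = fb (dl (\<lambda>n. aa n x)) t"
proof -
  have int: "integrable (m x) (uu t)"
  proof -
    interpret prob_space "m x" by (rule prob)
    show ?thesis by (rule integrable_const_bound[where B=1]) (use uu_01[OF t] in auto)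
  qed
  have "(\<integral>y. ser (\<lambda>n. aa n y) t \<partial>m x) = (\<Sum>n. (\<integral>y. t^n / fact n * aa n y \<partial>m x))"
    unfolding ser_def
  proof (rule integral_suminf)
    show "integrable (m x) (\<lambda>y. t^i / fact i * aa i y)" for i using aa_int_mx by simp
    show "AE y in m x. summable (\<lambda>i. norm (t^i / fact i * aa i y))"
      by (rule AE_I2, rule ser_summable_norm) (rule aa_abs)
    have "(\<integral>y. norm (t^i / fact i * aa i y) \<partial>m x) = norm (t^i / fact i * aa (Suc i) x)" for i
    proof -
      have "(\<integral>y. norm (t^i / fact i * aa i y) \<partial>m x) = (\<integral>y. \<bar>t^i / fact i\<bar> * aa i y \<partial>m x)"
        by (rule Bochner_Integration.integral_cong) (auto simp: abs_mult aa_01)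
      also have "\<dots> = \<bar>t^i / fact i\<bar> * aa (Suc i) x" by (simp add: aa_Suc)
      finally show ?thesis by (simp add: abs_mult aa_01)
    qed
    then show "summable (\<lambda>i. \<integral>y. norm (t^i / fact i * aa i y) \<partial>m x)"
      using ser_summable_norm[of "\<lambda>i. aa (Suc i) x" 1 t] aa_abs by simp
  qed
  also have "\<dots> = ser (\<lambda>n. aa (Suc n) x) t" unfolding ser_def by (simp add: aa_Suc)
  finally have I: "(\<integral>y. ser (\<lambda>n. aa n y) t \<partial>m x) = ser (\<lambda>n. aa (Suc n) x) t" .
  have "laplacian_m m (uu t) x = (\<integral>y. uu t y \<partial>m x) - uu t x" by (rule lap_eq[OF int])
  also have "(\<integral>y. uu t y \<partial>m x) = exp (- t) * ser (\<lambda>n. aa (Suc n) x) t"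
    unfolding uu_def fb_def using I by simp
  also have "exp (- t) * ser (\<lambda>n. aa (Suc n) x) t - uu t x = exp (- t) * (ser (\<lambda>n. aa (Suc n) x) t - ser (\<lambda>n. aa n x) t)"
    unfolding uu_def fb_def by (simp add: right_diff_distrib)
  also have "ser (\<lambda>n. aa (Suc n) x) t - ser (\<lambda>n. aa n x) t = ser (dl (\<lambda>n. aa n x)) t"
    by (rule ser_dl) (rule aa_abs)
  finally show ?thesis unfolding fb_def .
qed

definition HH :: "real \<Rightarrow> 'a \<Rightarrow> real" where
  "HH T x = ser (\<lambda>n. aa (Suc (Suc n)) x + 2 * aa (Suc n) x + aa n x) T"

lemma HH_meas[measurable]: "HH T \<in> borel_measurable borel"
  unfolding HH_def[abs_def] ser_def by measurable

lemma HH_props: assumes T: "0 \<le> T"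
  shows "0 \<le> HH T x" "HH T x \<le> 4 * exp T"
proof -
  have b: "\<bar>aa (Suc (Suc n)) x + 2 * aa (Suc n) x + aa n x\<bar> \<le> 4" for n
    using aa_01[of n x] aa_01[of "Suc n" x] aa_01[of "Suc (Suc n)" x] by simp
  show "0 \<le> HH T x" unfolding HH_def by (rule ser_nonneg[OF _ b T]) (simp add: aa_01)
  show "HH T x \<le> 4 * exp T" unfolding HH_def
    by (rule ser_mono_const[OF _ b T]) (use b in \<open>simp add: abs_le_iff\<close>)
qed

lemma HH_nn: assumes T: "0 \<le> T"
  shows "(\<integral>\<^sup>+x. ennreal (HH T x) \<partial>\<nu>) \<le> ennreal (exp T) * (4 * emeasure \<nu> D)"
  unfolding HH_def
proof (rule nn_ser_bound[where B=4])
  fix n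
  show "(\<lambda>x. aa (Suc (Suc n)) x + 2 * aa (Suc n) x + aa n x) \<in> borel_measurable borel" by measurable
  fix x
  show "0 \<le> aa (Suc (Suc n)) x + 2 * aa (Suc n) x + aa n x" by (simp add: aa_01)
  show "aa (Suc (Suc n)) x + 2 * aa (Suc n) x + aa n x \<le> 4"
    using aa_01[of n x] aa_01[of "Suc n" x] aa_01[of "Suc (Suc n)" x] by simp
next
  fix n
  have "(\<integral>\<^sup>+x. ennreal (aa (Suc (Suc n)) x + 2 * aa (Suc n) x + aa n x) \<partial>\<nu>) =
        (\<integral>\<^sup>+x. ennreal (aa (Suc (Suc n)) x) + 2 * ennreal (aa (Suc n) x) + ennreal (aa n x) \<partial>\<nu>)"
    by (rule nn_integral_cong) (simp add: aa_01 ennreal_plus[symmetric] ennreal_mult)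
  also have "\<dots> = (\<integral>\<^sup>+x. ennreal (aa (Suc (Suc n)) x) \<partial>\<nu>) + 2 * (\<integral>\<^sup>+x. ennreal (aa (Suc n) x) \<partial>\<nu>) + (\<integral>\<^sup>+x. ennreal (aa n x) \<partial>\<nu>)"
    by (simp add: nn_integral_add nn_integral_cmult)
  also have "\<dots> \<le> emeasure \<nu> D + 2 * emeasure \<nu> D + emeasure \<nu> D"
    by (intro add_mono mult_left_mono aa_nn) auto
  also have "\<dots> = (1 + 2 + 1) * emeasure \<nu> D"
    by (simp only: distrib_right mult.left_neutral)
  also have "(1 + 2 + 1 :: ennreal) = 4" by simp
  finally show "(\<integral>\<^sup>+x. ennreal (aa (Suc (Suc n)) x + 2 * aa (Suc n) x + aa n x) \<partial>\<nu>) \<le> 4 * emeasure \<nu> D" .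
qed (use T in auto)

lemma W_bound:
  assumes t: "0 \<le> t" and s: "0 \<le> s" "s \<noteq> t" "\<bar>s - t\<bar> < 1"
  shows "((uu s x - uu t x) / (s - t) - laplacian_m m (uu t) x)\<^sup>2 \<le> (s - t)\<^sup>2 * exp (t + 1) * HH (t + 1) x"
proof -
  define b where "b = (\<lambda>n. aa n x)"
  have bb: "\<bar>b n\<bar> \<le> 1" for n unfolding b_def by (rule aa_abs)
  obtain \<xi> where xi: "min s t \<le> \<xi>" "\<xi> \<le> max s t"
    "fb b s = fb b t + fb (dl b) t * (s - t) + fb (dl (dl b)) \<xi> / 2 * (s - t)\<^sup>2"
    using fb_taylor[of b 1 s t] bb s by blast
  have xi0: "0 \<le> \<xi>" "\<xi> \<le> t + 1" using xi s t by auto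
  have eqW: "(uu s x - uu t x) / (s - t) - laplacian_m m (uu t) x = fb (dl (dl b)) \<xi> / 2 * (s - t)"
    unfolding lap_uu[OF t] uu_def b_def[symmetric] using xi(3) s(2)
    by (simp add: field_simps power2_eq_square)
  have dd: "\<bar>dl (dl b) n\<bar> \<le> aa (Suc (Suc n)) x + 2 * aa (Suc n) x + aa n x" for n
    unfolding dl_def b_def using aa_01[of n x] aa_01[of "Suc n" x] aa_01[of "Suc (Suc n)" x] by simp
  have cb: "\<bar>aa (Suc (Suc n)) x + 2 * aa (Suc n) x + aa n x\<bar> \<le> 4" for n
    using aa_01[of n x] aa_01[of "Suc n" x] aa_01[of "Suc (Suc n)" x] by simp
  have "\<bar>ser (dl (dl b)) \<xi>\<bar> \<le> HH (t + 1) x"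
    unfolding HH_def by (rule ser_abs_bound[OF dd cb xi0])
  moreover have "\<bar>fb (dl (dl b)) \<xi>\<bar> \<le> \<bar>ser (dl (dl b)) \<xi>\<bar>"
    unfolding fb_def using xi0 by (simp add: abs_mult mult_left_le_one_le)
  ultimately have fbb: "\<bar>fb (dl (dl b)) \<xi>\<bar> \<le> HH (t + 1) x" by linarith
  have H: "0 \<le> HH (t + 1) x" "HH (t + 1) x \<le> 4 * exp (t + 1)" using HH_props[of "t + 1" x] t by auto
  have "(fb (dl (dl b)) \<xi> / 2 * (s - t))\<^sup>2 = (fb (dl (dl b)) \<xi>)\<^sup>2 / 4 * (s - t)\<^sup>2"
    by (simp add: power2_eq_square field_simps)
  also have "\<dots> \<le> (HH (t + 1) x)\<^sup>2 / 4 * (s - t)\<^sup>2"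
  proof -
    have "(\<bar>fb (dl (dl b)) \<xi>\<bar>)\<^sup>2 \<le> (HH (t + 1) x)\<^sup>2" by (rule power_mono[OF fbb]) simp
    then show ?thesis by (intro mult_right_mono divide_right_mono) auto
  qed
  also have "(HH (t + 1) x)\<^sup>2 / 4 \<le> exp (t + 1) * HH (t + 1) x"
    using mult_right_mono[OF H(2) H(1)] by (simp add: power2_eq_square)
  then have "(HH (t + 1) x)\<^sup>2 / 4 * (s - t)\<^sup>2 \<le> exp (t + 1) * HH (t + 1) x * (s - t)\<^sup>2"
    by (rule mult_right_mono) simp
  finally show ?thesis unfolding eqW by (simp add: mult.commute mult.left_commute)
qed

lemma heat: "heat_flow m \<nu> u0 uu"
  unfolding heat_flow_def
proof (intro conjI allI impI)
  fix t :: real assume t: "0 \<le> t"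
  show "L2_fun \<nu> (uu t)" unfolding L2_fun_def using uu_L2[OF t] by simp
next
  show "AE x in \<nu>. uu 0 x = u0 x" by (simp add: uu_0)
next
  fix t :: real assume t: "0 \<le> t"
  define F where "F s = (\<integral>\<^sup>+x. ennreal (((uu s x - uu t x) / (s - t) - laplacian_m m (uu t) x)\<^sup>2) \<partial>\<nu>)" for s
  define K where "K = ennreal (exp (t + 1)) * (ennreal (exp (t + 1)) * (4 * emeasure \<nu> D))"
  have K: "K < \<top>" unfolding K_def using Dfin by (simp add: ennreal_mult_less_top)
  have ev: "eventually (\<lambda>s. F s \<le> K * ennreal ((s - t)\<^sup>2)) (at t within {0..})"
    unfolding eventually_at
  proof (intro exI[of _ 1] conjI ballI impI)
    fix s :: real assume s: "s \<in> {0..}" "s \<noteq> t \<and> dist s t < 1"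
    have "F s \<le> (\<integral>\<^sup>+x. ennreal ((s - t)\<^sup>2 * exp (t + 1)) * ennreal (HH (t + 1) x) \<partial>\<nu>)"
      unfolding F_def
    proof (rule nn_integral_mono)
      fix x
      have "((uu s x - uu t x) / (s - t) - laplacian_m m (uu t) x)\<^sup>2 \<le> (s - t)\<^sup>2 * exp (t + 1) * HH (t + 1) x"
        by (rule W_bound) (use s t in \<open>auto simp: dist_real_def\<close>)
      then show "ennreal (((uu s x - uu t x) / (s - t) - laplacian_m m (uu t) x)\<^sup>2) \<le>
          ennreal ((s - t)\<^sup>2 * exp (t + 1)) * ennreal (HH (t + 1) x)"
        using HH_props[of "t + 1" x] t by (simp add: ennreal_mult[symmetric] ennreal_leI)
    qed
    also have "\<dots> = ennreal ((s - t)\<^sup>2 * exp (t + 1)) * (\<integral>\<^sup>+x. ennreal (HH (t + 1) x) \<partial>\<nu>)"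
      by (rule nn_integral_cmult) simp
    also have "\<dots> \<le> ennreal ((s - t)\<^sup>2 * exp (t + 1)) * (ennreal (exp (t + 1)) * (4 * emeasure \<nu> D))"
      by (rule mult_left_mono[OF HH_nn]) (use t in auto)
    also have "\<dots> = K * ennreal ((s - t)\<^sup>2)"
      unfolding K_def by (simp add: ennreal_mult mult_ac)
    finally show "F s \<le> K * ennreal ((s - t)\<^sup>2)" .
  qed auto
  have lim: "((\<lambda>s. K * ennreal ((s - t)\<^sup>2)) \<longlongrightarrow> K * ennreal 0) (at t within {0..})"
  proof (rule ennreal_tendsto_cmult[OF K])
    have "((\<lambda>s. (s - t)\<^sup>2) \<longlongrightarrow> (t - t)\<^sup>2) (at t within {0..})" by (intro tendsto_intros)
    then show "((\<lambda>s. ennreal ((s - t)\<^sup>2)) \<longlongrightarrow> ennreal 0) (at t within {0..})"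
      by (intro tendsto_ennrealI) simp
  qed
  have "(F \<longlongrightarrow> 0) (at t within {0..})"
    by (rule tendsto_sandwich[OF _ ev tendsto_const]) (use lim in auto)
  then show "((\<lambda>s. \<integral>\<^sup>+x. ennreal (((uu s x - uu t x) / (s - t) - laplacian_m m (uu t) x)\<^sup>2) \<partial>\<nu>) \<longlongrightarrow> 0)
      (at t within {0..})" unfolding F_def .
qed

lemma uu_vanish: assumes x: "x \<in> N_set m D" "x \<notin> D" shows "uu t x = 0"
proof -
  have "aa n x = 0" for n
  proof (cases n)
    case 0
    then show ?thesis using aa_0 u0D[of x] u0nn[of x] x by simp
  next
    case (Suc k)
    have "emeasure (mstar m n x) D = 0" using x Suc unfolding N_set_def by auto
    then have "measure (mstar m n x) D = 0" by (simp add: measure_def)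
    then show ?thesis using aa_D[of n x] aa_01[of n x] by simp
  qed
  then show ?thesis unfolding uu_def fb_def ser_def by simp
qed

end

context constr
begin

lemma not_pos: assumes N: "emeasure \<nu> (N_set m D) \<noteq> 0" shows "\<not> (AE x in \<nu>. 0 < uu 1 x)"
proof
  assume ae: "AE x in \<nu>. 0 < uu 1 x"
  have Nm: "N_set m D \<in> sets borel" by (rule N_set_meas[OF D])
  have Zm: "{x. \<not> 0 < uu 1 x} \<in> sets borel" by measurable
  have Z0: "emeasure \<nu> {x. \<not> 0 < uu 1 x} = 0"
    using ae AE_iff_measurable[of "{x. \<not> 0 < uu 1 x}" \<nu> "\<lambda>x. 0 < uu 1 x"] Zm by simp
  have "N_set m D - D \<subseteq> {x. \<not> 0 < uu 1 x}" using uu_vanish by auto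
  then have A: "emeasure \<nu> (N_set m D - D) = 0"
    using emeasure_mono[of "N_set m D - D" "{x. \<not> 0 < uu 1 x}" \<nu>] Zm Z0 by simp
  have B: "emeasure \<nu> (D \<inter> N_set m D) = 0" by (rule DN_null[OF D])
  have "emeasure \<nu> (N_set m D) \<le> emeasure \<nu> (N_set m D - D) + emeasure \<nu> (D \<inter> N_set m D)"
  proof -
    have "N_set m D = (N_set m D - D) \<union> (D \<inter> N_set m D)" by auto
    then show ?thesis using emeasure_subadditive[of "N_set m D - D" \<nu> "D \<inter> N_set m D"] Nm D
      by (metis sets.Diff sets.Int sets_nu_eq)
  qed
  then show False using A B N by simp
qed

end

context mrw
begin

lemma find_level:
  fixes u0 :: "'a \<Rightarrow> real"
  assumes [measurable]: "u0 \<in> borel_measurable borel" and pos: "AE x in \<nu>. 0 \<le> u0 x"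
    and nz: "\<not> (AE x in \<nu>. u0 x = 0)"
  shows "\<exists>\<epsilon>>0. emeasure \<nu> {x. \<epsilon> < u0 x} \<noteq> 0"
proof (rule ccontr)
  assume "\<not> ?thesis"
  then have z: "\<And>k::nat. emeasure \<nu> {x. inverse (real (Suc k)) < u0 x} = 0" by auto
  have "emeasure \<nu> (\<Union>k. {x. inverse (real (Suc k)) < u0 x}) = 0"
    by (rule emeasure_UN_eq_0) (use z in auto)
  moreover have "(\<Union>k. {x. inverse (real (Suc k)) < u0 x}) = {x. 0 < u0 x}"
  proof
    show "{x. 0 < u0 x} \<subseteq> (\<Union>k. {x. inverse (real (Suc k)) < u0 x})"
    proof
      fix x assume "x \<in> {x. 0 < u0 x}"
      then obtain n where "n > 0" "inverse (real n) < u0 x" using ex_inverse_of_nat_less[of "u0 x"] by auto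
      then have "inverse (real (Suc (n - 1))) < u0 x" by simp
      then show "x \<in> (\<Union>k. {x. inverse (real (Suc k)) < u0 x})" by blast
    qed
  next
    show "(\<Union>k. {x. inverse (real (Suc k)) < u0 x}) \<subseteq> {x. 0 < u0 x}"
    proof
      fix x assume "x \<in> (\<Union>k. {x. inverse (real (Suc k)) < u0 x})"
      then obtain k where k1: "inverse (real (Suc k)) < u0 x" by blast
      have k2: "0 < inverse (real (Suc k))" by simp
      show "x \<in> {x. 0 < u0 x}" using less_trans[OF k2 k1] by simp
    qed
  qed
  ultimately have "emeasure \<nu> {x. 0 < u0 x} = 0" by simp
  then have "AE x in \<nu>. \<not> 0 < u0 x"
    by (subst AE_iff_measurable[of "{x. 0 < u0 x}"]) auto
  with pos have "AE x in \<nu>. u0 x = 0" by eventually_elim auto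
  with nz show False by simp
qed

lemma cheb:
  fixes u0 :: "'a \<Rightarrow> real"
  assumes [measurable]: "u0 \<in> borel_measurable borel" and L2: "integrable \<nu> (\<lambda>x. (u0 x)\<^sup>2)" and e: "0 < \<epsilon>"
  shows "emeasure \<nu> {x. \<epsilon> < u0 x} < \<infinity>"
proof -
  have "emeasure \<nu> {x. \<epsilon> < u0 x} = (\<integral>\<^sup>+x. indicator {x. \<epsilon> < u0 x} x \<partial>\<nu>)" by simp
  also have "\<dots> \<le> (\<integral>\<^sup>+x. ennreal ((u0 x)\<^sup>2 / \<epsilon>\<^sup>2) \<partial>\<nu>)"
  proof (rule nn_integral_mono)
    fix x
    show "indicator {x. \<epsilon> < u0 x} x \<le> ennreal ((u0 x)\<^sup>2 / \<epsilon>\<^sup>2)"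
    proof (cases "\<epsilon> < u0 x")
      case True
      then have "\<epsilon>\<^sup>2 \<le> (u0 x)\<^sup>2" using e by (intro power_mono) auto
      then have "1 \<le> (u0 x)\<^sup>2 / \<epsilon>\<^sup>2" using e by simp
      then show ?thesis using True by simp
    qed simp
  qed
  also have "\<dots> < \<infinity>"
  proof -
    have "integrable \<nu> (\<lambda>x. (u0 x)\<^sup>2 / \<epsilon>\<^sup>2)" using L2 by simp
    then show ?thesis by (simp add: integrable_iff_bounded)
  qed
  finally show ?thesis .
qed

end

theorem theorem2p9:
  fixes m :: "'a::polish_space \<Rightarrow> 'a measure" and \<nu> :: "'a measure"
  assumes "metric_random_walk_space m"
    and "radon_measure \<nu>"
    and "sigma_finite_measure \<nu>"
    and "invariant_measure m \<nu>"
    and "reversible_measure m \<nu>"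
  shows "(m_connected m \<nu> \<longleftrightarrow>
            (\<forall>u0. L2_fun \<nu> u0 \<and> (AE x in \<nu>. 0 \<le> u0 x) \<and> \<not> (AE x in \<nu>. u0 x = 0) \<longrightarrow>
               (\<forall>u. heat_flow m \<nu> u0 u \<longrightarrow> (\<forall>t>0. AE x in \<nu>. u t x > 0))))
       \<and> (weakly_m_connected m \<nu> \<longleftrightarrow>
            (\<forall>u0. L2_fun \<nu> u0 \<and> continuous_on UNIV u0 \<and> (AE x in \<nu>. 0 \<le> u0 x) \<and>
                  \<not> (AE x in \<nu>. u0 x = 0) \<longrightarrow>
               (\<forall>u. heat_flow m \<nu> u0 u \<longrightarrow> (\<forall>t>0. AE x in \<nu>. u t x > 0))))"
proof -
  interpret mrw m \<nu>
    by (rule mrw.intro) (use assms in \<open>auto simp: metric_random_walk_space_def radon_measure_def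
        invariant_measure_def reversible_measure_def\<close>)
  have sn: "sets \<nu> = sets borel" by (rule sets_nu)
  have fwd: "AE x in \<nu>. u t x > 0"
    if u0: "L2_fun \<nu> u0" "AE x in \<nu>. 0 \<le> u0 x" and hfu: "heat_flow m \<nu> u0 u" and t: "t > 0"
      and D: "D \<in> sets borel" "emeasure \<nu> (N_set m D) = 0" "0 < \<epsilon>" "\<And>x. x \<in> D \<Longrightarrow> \<epsilon> \<le> u0 x"
    for u0 u t D \<epsilon>
  proof -
    interpret hf m \<nu> u0 u by (unfold_locales, (rule hfu)?)
    show ?thesis
      by (rule positivity[OF _ _ u0(2) D t]) (use u0(1) in \<open>auto simp: L2_fun_def\<close>)
  qed
  have bwd: "\<exists>u. heat_flow m \<nu> u0 u \<and> \<not> (\<forall>t>0. AE x in \<nu>. u t x > 0)"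
    if DD: "D \<in> sets borel" "emeasure \<nu> D < \<infinity>" "emeasure \<nu> (N_set m D) \<noteq> 0"
      and uu0: "u0 \<in> borel_measurable borel" "\<And>x. 0 \<le> u0 x" "\<And>x. u0 x \<le> indicator D x"
    for D u0
  proof -
    interpret constr m \<nu> D u0 by (unfold_locales, (use DD uu0 in auto)?)
    have "\<not> (\<forall>t>0. AE x in \<nu>. uu t x > 0)"
    proof
      assume "\<forall>t>0. AE x in \<nu>. uu t x > 0"
      then have "AE x in \<nu>. uu 1 x > 0" by simp
      then show False using not_pos[OF DD(3)] by simp
    qed
    then show ?thesis using heat by blast
  qed
  have L2ind: "L2_fun \<nu> u0"
    if D: "D \<in> sets borel" "emeasure \<nu> D < \<infinity>"
      and u0: "u0 \<in> borel_measurable borel" "\<And>x. 0 \<le> u0 x" "\<And>x. u0 x \<le> indicator D x"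
    for D u0
  proof -
    have "(\<integral>\<^sup>+x. ennreal ((u0 x)\<^sup>2) \<partial>\<nu>) \<le> (\<integral>\<^sup>+x. indicator D x \<partial>\<nu>)"
    proof (rule nn_integral_mono)
      fix x show "ennreal ((u0 x)\<^sup>2) \<le> indicator D x"
        using u0(2)[of x] u0(3)[of x]
        by (cases "x \<in> D") (auto intro!: ennreal_leI simp: power2_eq_square mult_le_one)
    qed
    also have "\<dots> = emeasure \<nu> D" using D by simp
    finally have "(\<integral>\<^sup>+x. ennreal ((u0 x)\<^sup>2) \<partial>\<nu>) < \<infinity>" using D(2) by (rule le_less_trans)
    then have "integrable \<nu> (\<lambda>x. (u0 x)\<^sup>2)" by (rule nn_fin_int[rotated]) (use u0 in simp)
    then show ?thesis unfolding L2_fun_def using u0 by simp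
  qed
  show ?thesis
  proof (intro conjI iffI allI impI)
    fix u0 u and t :: real
    assume mc: "m_connected m \<nu>"
      and u0: "L2_fun \<nu> u0 \<and> (AE x in \<nu>. 0 \<le> u0 x) \<and> \<not> (AE x in \<nu>. u0 x = 0)"
      and hfu: "heat_flow m \<nu> u0 u" and t: "0 < t"
    have [measurable]: "u0 \<in> borel_measurable borel" using u0 by (simp add: L2_fun_def)
    obtain \<epsilon> where e: "0 < \<epsilon>" "emeasure \<nu> {x. \<epsilon> < u0 x} \<noteq> 0"
      using find_level[of u0] u0 by auto
    have fin: "emeasure \<nu> {x. \<epsilon> < u0 x} < \<infinity>"
      by (rule cheb) (use u0 e in \<open>auto simp: L2_fun_def\<close>)
    have Dm: "{x. \<epsilon> < u0 x} \<in> sets \<nu>" unfolding sn by measurable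
    have p: "0 < emeasure \<nu> {x. \<epsilon> < u0 x}" using e(2) by (simp add: zero_less_iff_neq_zero)
    have "emeasure \<nu> (N_set m {x. \<epsilon> < u0 x}) = 0"
      using mc[unfolded m_connected_def] Dm p fin by blast
    then show "AE x in \<nu>. u t x > 0"
      by (intro fwd[of u0 u t "{x. \<epsilon> < u0 x}" \<epsilon>]) (use u0 hfu t e in auto)
  next
    assume H: "\<forall>u0. L2_fun \<nu> u0 \<and> (AE x in \<nu>. 0 \<le> u0 x) \<and> \<not> (AE x in \<nu>. u0 x = 0) \<longrightarrow>
               (\<forall>u. heat_flow m \<nu> u0 u \<longrightarrow> (\<forall>t>0. AE x in \<nu>. u t x > 0))"
    show "m_connected m \<nu>" unfolding m_connected_def
    proof (intro ballI impI, rule ccontr)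
      fix D assume D: "D \<in> sets \<nu>" "0 < emeasure \<nu> D \<and> emeasure \<nu> D < \<infinity>"
        and N: "emeasure \<nu> (N_set m D) \<noteq> 0"
      have Db: "D \<in> sets borel" using D sn by simp
      have u0L2: "L2_fun \<nu> (indicator D :: 'a \<Rightarrow> real)"
        by (rule L2ind[OF Db]) (use D Db in auto)
      have "\<not> (AE x in \<nu>. (indicator D x :: real) = 0)"
      proof
        assume "AE x in \<nu>. (indicator D x :: real) = 0"
        then have "AE x in \<nu>. x \<notin> D" by (rule AE_mp) (auto simp: indicator_def)
        then have "emeasure \<nu> D = 0" using AE_iff_measurable[of D \<nu> "\<lambda>x. x \<notin> D"] D by auto
        then show False using D by simp
      qed
      moreover obtain u where u: "heat_flow m \<nu> (indicator D) u" "\<not> (\<forall>t>0. AE x in \<nu>. u t x > 0)"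
        using bwd[OF Db _ N, of "indicator D"] D by auto
      moreover have "AE x in \<nu>. 0 \<le> (indicator D x :: real)" by simp
      ultimately have "\<forall>u. heat_flow m \<nu> (indicator D) u \<longrightarrow> (\<forall>t>0. AE x in \<nu>. u t x > 0)"
        using spec[OF H, of "indicator D"] u0L2 by blast
      then show False using u by blast
    qed
  next
    fix u0 u and t :: real
    assume wc: "weakly_m_connected m \<nu>"
      and u0: "L2_fun \<nu> u0 \<and> continuous_on UNIV u0 \<and> (AE x in \<nu>. 0 \<le> u0 x) \<and> \<not> (AE x in \<nu>. u0 x = 0)"
      and hfu: "heat_flow m \<nu> u0 u" and t: "0 < t"
    have [measurable]: "u0 \<in> borel_measurable borel" using u0 by (simp add: L2_fun_def)
    obtain \<epsilon> where e: "0 < \<epsilon>" "emeasure \<nu> {x. \<epsilon> < u0 x} \<noteq> 0"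
      using find_level[of u0] u0 by auto
    have fin: "emeasure \<nu> {x. \<epsilon> < u0 x} < \<infinity>"
      by (rule cheb) (use u0 e in \<open>auto simp: L2_fun_def\<close>)
    have op: "open {x. \<epsilon> < u0 x}"
    proof -
      have "open (u0 -` {\<epsilon><..})" by (rule open_vimage) (use u0 in auto)
      moreover have "u0 -` {\<epsilon><..} = {x. \<epsilon> < u0 x}" by auto
      ultimately show ?thesis by simp
    qed
    have "emeasure \<nu> (N_set m {x. \<epsilon> < u0 x}) = 0"
      using wc e fin op unfolding weakly_m_connected_def by (auto simp: zero_less_iff_neq_zero)
    then show "AE x in \<nu>. u t x > 0"
      by (intro fwd[of u0 u t "{x. \<epsilon> < u0 x}" \<epsilon>]) (use u0 hfu t e in auto)
  next
    assume H: "\<forall>u0. L2_fun \<nu> u0 \<and> continuous_on UNIV u0 \<and> (AE x in \<nu>. 0 \<le> u0 x) \<and>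
                  \<not> (AE x in \<nu>. u0 x = 0) \<longrightarrow>
               (\<forall>u. heat_flow m \<nu> u0 u \<longrightarrow> (\<forall>t>0. AE x in \<nu>. u t x > 0))"
    show "weakly_m_connected m \<nu>" unfolding weakly_m_connected_def
    proof (intro allI impI, rule ccontr)
      fix D assume D: "open D \<and> 0 < emeasure \<nu> D \<and> emeasure \<nu> D < \<infinity>"
        and N: "emeasure \<nu> (N_set m D) \<noteq> 0"
      have Db: "D \<in> sets borel" using D by auto
      define v where "v x = (if D = UNIV then 1 else min 1 (infdist x (- D)))" for x
      have vc: "continuous_on UNIV v"
        unfolding v_def by (cases "D = UNIV") (auto intro!: continuous_intros)
      have vm[measurable]: "v \<in> borel_measurable borel" by (rule borel_measurable_continuous_onI[OF vc])
      have v0: "0 \<le> v x" for x unfolding v_def by (simp add: infdist_nonneg)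
      have vD: "v x \<le> indicator D x" for x
      proof (cases "x \<in> D")
        case True then show ?thesis unfolding v_def by auto
      next
        case False then show ?thesis unfolding v_def by auto
      qed
      have vpos: "0 < v x" if "x \<in> D" for x
      proof (cases "D = UNIV")
        case False
        have "closed (- D)" using D by auto
        moreover have "- D \<noteq> {}" using False by auto
        ultimately have "0 < infdist x (- D)" using that by (intro infdist_pos_not_in_closed) auto
        then show ?thesis using False unfolding v_def by simp
      qed (simp add: v_def)
      have vL2: "L2_fun \<nu> v" by (rule L2ind[OF Db]) (use D v0 vD in auto)
      have "\<not> (AE x in \<nu>. v x = 0)"
      proof
        assume "AE x in \<nu>. v x = 0"
        then have "AE x in \<nu>. x \<notin> D"
        proof (rule AE_mp, intro AE_I2 impI)
          fix x assume "v x = 0" then show "x \<notin> D" using vpos[of x] by auto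
        qed
        then have "emeasure \<nu> D = 0" using AE_iff_measurable[of D \<nu> "\<lambda>x. x \<notin> D"] Db by auto
        then show False using D by simp
      qed
      moreover obtain u where u: "heat_flow m \<nu> v u" "\<not> (\<forall>t>0. AE x in \<nu>. u t x > 0)"
        using bwd[OF Db _ N vm v0 vD] D by auto
      moreover have "AE x in \<nu>. 0 \<le> v x" using v0 by simp
      ultimately have "\<forall>u. heat_flow m \<nu> v u \<longrightarrow> (\<forall>t>0. AE x in \<nu>. u t x > 0)"
        using spec[OF H, of v] vL2 vc by blast
      then show False using u by blast
    qed
  qed
qed


end
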